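(* Let $G$ be a finite group, $n = \exp(G)$, and $\sigma \in \mathrm{Gal}(\mathbb{Q}_n:\mathbb{Q})$. Suppose $\sigma$ fixes all but $4$ irreducible characters of $G$ and has exactly two orbits of size $2$ on $\mathrm{Irr}(G)$, so that the characters not fixed by $\sigma$ are $X = \{\chi_1, \sigma\chi_1, \chi_2, \sigma\chi_2\}$. If $x \in G$ represents a conjugacy class not fixed by $\sigma$, then $$|C_G(x)| = |\chi_1(x) - \sigma\chi_1(x)|^2 + |\chi_2(x) - \sigma\chi_2(x)|^2.$$
   Context: $\exp(G)$ is the exponent of $G$; $\mathbb{Q}_n=\mathbb{Q}(\zeta)$ with $\zeta$ a primitive $n$-th root of unity. For $\sigma\in\mathrm{Gal}(\mathbb{Q}_n:\mathbb{Q})$ with $\sigma(\zeta)=\zeta^{r}$ ($r$ coprime to $n$), $\sigma$ acts on $\mathrm{Irr}(G)$ (complex irreducible characters) by $(\sigma\chi)(g)=\sigma(\chi(g))$ and on conjugacy classes by $\sigma\cdot x^G=(x^{r})^G$; then $(\sigma\chi)(x)=\chi(\sigma\cdot x)$. *)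

theory Defs
  imports "HOL-Algebra.Group" "Jordan_Normal_Form.Matrix" "HOL-Computational_Algebra.Polynomial"
begin

definition group_exponent :: "('a, 'b) monoid_scheme \<Rightarrow> nat" where
  "group_exponent G = (LEAST n. 0 < n \<and> (\<forall>x\<in>carrier G. x [^]\<^bsub>G\<^esub> n = \<one>\<^bsub>G\<^esub>))"

definition prim_root :: "nat \<Rightarrow> complex" where
  "prim_root n = cis (2 * pi / real n)"

definition cyclotomic_field :: "nat \<Rightarrow> complex set" where
  "cyclotomic_field n = {poly p (prim_root n) | p. \<forall>i. coeff p i \<in> \<rat>}"

(* sigma is an element of Gal(Q_n : Q), i.e. a field automorphism of Q_n
   (it then automatically fixes Q); values outside Q_n are irrelevant *)
definition is_galois_auto :: "nat \<Rightarrow> (complex \<Rightarrow> complex) \<Rightarrow> bool" where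
  "is_galois_auto n \<sigma> \<longleftrightarrow>
     bij_betw \<sigma> (cyclotomic_field n) (cyclotomic_field n) \<and>
     (\<forall>a\<in>cyclotomic_field n. \<forall>b\<in>cyclotomic_field n.
        \<sigma> (a + b) = \<sigma> a + \<sigma> b \<and> \<sigma> (a * b) = \<sigma> a * \<sigma> b) \<and>
     \<sigma> 1 = 1"

definition mat_trace :: "complex mat \<Rightarrow> complex" where
  "mat_trace A = (\<Sum>i<dim_row A. A $$ (i, i))"

definition is_rep :: "('a, 'b) monoid_scheme \<Rightarrow> nat \<Rightarrow> ('a \<Rightarrow> complex mat) \<Rightarrow> bool" where
  "is_rep G d \<rho> \<longleftrightarrow>
     (\<forall>g\<in>carrier G. \<rho> g \<in> carrier_mat d d) \<and>
     \<rho> \<one>\<^bsub>G\<^esub> = 1\<^sub>m d \<and>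
     (\<forall>g\<in>carrier G. \<forall>h\<in>carrier G. \<rho> (g \<otimes>\<^bsub>G\<^esub> h) = \<rho> g * \<rho> h)"

definition is_subspace :: "nat \<Rightarrow> complex vec set \<Rightarrow> bool" where
  "is_subspace d W \<longleftrightarrow> W \<subseteq> carrier_vec d \<and> 0\<^sub>v d \<in> W \<and>
     (\<forall>v\<in>W. \<forall>w\<in>W. v + w \<in> W) \<and> (\<forall>c. \<forall>v\<in>W. c \<cdot>\<^sub>v v \<in> W)"

definition is_irred_rep :: "('a, 'b) monoid_scheme \<Rightarrow> nat \<Rightarrow> ('a \<Rightarrow> complex mat) \<Rightarrow> bool" where
  "is_irred_rep G d \<rho> \<longleftrightarrow> is_rep G d \<rho> \<and> 0 < d \<and>
     (\<forall>W. is_subspace d W \<and> (\<forall>g\<in>carrier G. \<forall>w\<in>W. \<rho> g *\<^sub>v w \<in> W)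
          \<longrightarrow> W = {0\<^sub>v d} \<or> W = carrier_vec d)"

definition character :: "('a, 'b) monoid_scheme \<Rightarrow> ('a \<Rightarrow> complex mat) \<Rightarrow> 'a \<Rightarrow> complex" where
  "character G \<rho> = (\<lambda>g. if g \<in> carrier G then mat_trace (\<rho> g) else 0)"

definition Irr :: "('a, 'b) monoid_scheme \<Rightarrow> ('a \<Rightarrow> complex) set" where
  "Irr G = {character G \<rho> | \<rho> d. is_irred_rep G d \<rho>}"

definition gal_act :: "('a, 'b) monoid_scheme \<Rightarrow> (complex \<Rightarrow> complex) \<Rightarrow> ('a \<Rightarrow> complex) \<Rightarrow> 'a \<Rightarrow> complex" where
  "gal_act G \<sigma> \<chi> = (\<lambda>g. if g \<in> carrier G then \<sigma> (\<chi> g) else 0)"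

definition conj_class :: "('a, 'b) monoid_scheme \<Rightarrow> 'a \<Rightarrow> 'a set" where
  "conj_class G x = {g \<otimes>\<^bsub>G\<^esub> x \<otimes>\<^bsub>G\<^esub> inv\<^bsub>G\<^esub> g | g. g \<in> carrier G}"

definition centralizer :: "('a, 'b) monoid_scheme \<Rightarrow> 'a \<Rightarrow> 'a set" where
  "centralizer G x = {g \<in> carrier G. g \<otimes>\<^bsub>G\<^esub> x = x \<otimes>\<^bsub>G\<^esub> g}"

end

theory Submission
  imports Defs "Jordan_Normal_Form.Spectral_Radius" "HOL-Algebra.Group_Action" "HOL-Algebra.Multiplicative_Group"
begin

lemma mat_trace_mult_comm:
  assumes A: "A \<in> carrier_mat n m" and B: "B \<in> carrier_mat m n"
  shows "mat_trace (A * B) = mat_trace (B * A)"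
proof -
  have "mat_trace (A * B) = (\<Sum>i<n. \<Sum>k<m. A $$ (i,k) * B $$ (k,i))"
    unfolding mat_trace_def using A B
    by (intro sum.cong refl) (auto simp: scalar_prod_def intro!: sum.cong lessThan_atLeast0)
  also have "\<dots> = (\<Sum>k<m. \<Sum>i<n. B $$ (k,i) * A $$ (i,k))"
    by (subst sum.swap) (simp add: mult.commute)
  also have "\<dots> = mat_trace (B * A)"
    unfolding mat_trace_def using A B
    by (intro sum.cong refl) (auto simp: scalar_prod_def intro!: sum.cong lessThan_atLeast0)
  finally show ?thesis .
qed

lemma mat_trace_one[simp]: "mat_trace (1\<^sub>m n) = of_nat n"
  unfolding mat_trace_def by simp

definition lc :: "nat \<Rightarrow> complex vec list \<Rightarrow> (nat \<Rightarrow> complex) \<Rightarrow> complex vec" where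
  "lc d vs c = vec d (\<lambda>j. \<Sum>i<length vs. c i * (vs!i) $ j)"

definition indep :: "nat \<Rightarrow> complex vec list \<Rightarrow> bool" where
  "indep d vs \<longleftrightarrow> set vs \<subseteq> carrier_vec d \<and> (\<forall>c. lc d vs c = 0\<^sub>v d \<longrightarrow> (\<forall>i<length vs. c i = 0))"

lemma lc_carrier[simp]: "lc d vs c \<in> carrier_vec d"
  unfolding lc_def by simp

lemma lc_dim[simp]: "dim_vec (lc d vs c) = d"
  unfolding lc_def by simp

lemma lc_Nil: "lc d [] c = 0\<^sub>v d"
  unfolding lc_def by auto

lemma lc_Cons: assumes "v \<in> carrier_vec d"
  shows "lc d (v # vs) c = c 0 \<cdot>\<^sub>v v + lc d vs (\<lambda>i. c (Suc i))"
  by (rule eq_vecI) (use assms in \<open>auto simp del: sum.lessThan_Suc simp: lc_def sum.lessThan_Suc_shift\<close>)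

lemma lc_snoc: assumes "w \<in> carrier_vec d"
  shows "lc d (vs @ [w]) c = lc d vs c + c (length vs) \<cdot>\<^sub>v w"
  by (rule eq_vecI) (use assms in \<open>auto simp: lc_def nth_append intro!: sum.cong\<close>)

lemma subspace_smult: "is_subspace d W \<Longrightarrow> v \<in> W \<Longrightarrow> c \<cdot>\<^sub>v v \<in> W"
  unfolding is_subspace_def by blast

lemma subspace_add: "is_subspace d W \<Longrightarrow> v \<in> W \<Longrightarrow> w \<in> W \<Longrightarrow> v + w \<in> W"
  unfolding is_subspace_def by blast

lemma subspace_zero: "is_subspace d W \<Longrightarrow> 0\<^sub>v d \<in> W"
  unfolding is_subspace_def by blast

lemma subspace_carrier: "is_subspace d W \<Longrightarrow> W \<subseteq> carrier_vec d"
  unfolding is_subspace_def by blast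

lemma lc_in_subspace:
  assumes W: "is_subspace d W" shows "set vs \<subseteq> W \<Longrightarrow> lc d vs c \<in> W"
proof (induction vs arbitrary: c)
  case Nil
  then show ?case using subspace_zero[OF W] by (simp add: lc_Nil)
next
  case (Cons v vs)
  have v: "v \<in> carrier_vec d" using Cons.prems subspace_carrier[OF W] by auto
  show ?case unfolding lc_Cons[OF v]
    using Cons subspace_add[OF W] subspace_smult[OF W] by auto
qed

lemma subspace_carrier_vec: "is_subspace d (carrier_vec d)"
  unfolding is_subspace_def by auto

lemma indep_snoc:
  assumes ind: "indep d vs" and w: "w \<in> carrier_vec d" and nw: "w \<notin> range (lc d vs)"
  shows "indep d (vs @ [w])"
  unfolding indep_def
proof (intro conjI allI impI)
  show "set (vs @ [w]) \<subseteq> carrier_vec d" using ind w unfolding indep_def by auto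
  fix c i assume eq: "lc d (vs @ [w]) c = 0\<^sub>v d" and i: "i < length (vs @ [w])"
  let ?k = "length vs"
  have eq2: "lc d vs c + c ?k \<cdot>\<^sub>v w = 0\<^sub>v d" using eq lc_snoc[OF w] by simp
  have ck: "c ?k = 0"
  proof (rule ccontr)
    assume ck: "c ?k \<noteq> 0"
    have "w = lc d vs (\<lambda>i. - c i / c ?k)"
    proof (rule eq_vecI)
      fix j assume j: "j < dim_vec (lc d vs (\<lambda>i. - c i / c ?k))"
      hence j: "j < d" by simp
      have "(lc d vs c + c ?k \<cdot>\<^sub>v w) $ j = 0" using eq2 j by simp
      hence "(\<Sum>i<?k. c i * vs ! i $ j) + c ?k * w $ j = 0"
        using j w by (simp add: lc_def)
      hence "w $ j = - (\<Sum>i<?k. c i * vs ! i $ j) / c ?k" using ck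
        by (simp add: field_simps eq_neg_iff_add_eq_0)
      also have "\<dots> = (\<Sum>i<?k. - c i / c ?k * vs ! i $ j)"
        by (simp add: sum_divide_distrib sum_negf[symmetric])
      finally show "w $ j = lc d vs (\<lambda>i. - c i / c ?k) $ j" using j by (simp add: lc_def)
    qed (use w in auto)
    thus False using nw by auto
  qed
  have "0 \<cdot>\<^sub>v w = 0\<^sub>v d" using w by auto
  hence "lc d vs c = 0\<^sub>v d" using eq2 ck by simp
  hence "\<forall>i<?k. c i = 0" using ind unfolding indep_def by blast
  thus "c i = 0" using ck i by (cases "i < ?k") (auto simp: less_Suc_eq)
qed

lemma indep_length:
  assumes ind: "indep d vs" shows "length vs \<le> d"
proof (rule ccontr)
  let ?k = "length vs"
  assume "\<not> ?k \<le> d"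
  hence kd: "d < ?k" by simp
  define A where "A = mat\<^sub>r ?k ?k (\<lambda>i. if i = ?k - 1 then 0\<^sub>v ?k else vec ?k (\<lambda>j. vs ! j $ i))"
  have "det A = 0" unfolding A_def by (rule det_row_0) (use kd in auto)
  moreover have A: "A \<in> carrier_mat ?k ?k" unfolding A_def by simp
  ultimately obtain v where v: "v \<in> carrier_vec ?k" "v \<noteq> 0\<^sub>v ?k" "A *\<^sub>v v = 0\<^sub>v ?k"
    using det_0_iff_vec_prod_zero_field by blast
  have "lc d vs (\<lambda>i. v $ i) = 0\<^sub>v d"
  proof (rule eq_vecI)
    fix j assume "j < dim_vec (0\<^sub>v d :: complex vec)"
    hence j: "j < d" by simp
    have "(A *\<^sub>v v) $ j = 0" using v(3) j kd by simp
    moreover have "(A *\<^sub>v v) $ j = (\<Sum>i<?k. vs ! i $ j * v $ i)"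
      using j kd v(1) unfolding A_def by (auto simp: scalar_prod_def lessThan_atLeast0)
    ultimately show "lc d vs (\<lambda>i. v $ i) $ j = 0\<^sub>v d $ j" using j
      by (simp add: lc_def mult.commute)
  qed simp
  hence "\<forall>i<?k. v $ i = 0" using ind unfolding indep_def by blast
  hence "v = 0\<^sub>v ?k" using v(1) by (intro eq_vecI) auto
  thus False using v(2) by simp
qed

lemma max_extend:
  assumes W: "is_subspace d W" and ind: "indep d vs0" and sub: "set vs0 \<subseteq> W"
  shows "\<exists>ws. indep d (vs0 @ ws) \<and> set ws \<subseteq> W \<and> W \<subseteq> range (lc d (vs0 @ ws))"
proof -
  let ?P = "\<lambda>ws. indep d (vs0 @ ws) \<and> set ws \<subseteq> W"
  have P0: "?P []" using ind by simp
  have bnd: "\<forall>ws. ?P ws \<longrightarrow> length ws < Suc d"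
    using indep_length by fastforce
  obtain ws where ws: "?P ws" and mx: "\<forall>ys. ?P ys \<longrightarrow> length ys \<le> length ws"
    using ex_has_greatest_nat[of ?P "[]" length "Suc d", OF P0 bnd] by blast
  have "W \<subseteq> range (lc d (vs0 @ ws))"
  proof
    fix w assume w: "w \<in> W"
    show "w \<in> range (lc d (vs0 @ ws))"
    proof (rule ccontr)
      assume nw: "w \<notin> range (lc d (vs0 @ ws))"
      have wc: "w \<in> carrier_vec d" using w subspace_carrier[OF W] by auto
      have "?P (ws @ [w])" using indep_snoc[OF conjunct1[OF ws] wc nw] ws w by simp
      with mx show False by fastforce
    qed
  qed
  with ws show ?thesis by blast
qed

lemma mat_of_cols_mult_vec:
  assumes "set ws \<subseteq> carrier_vec d" and a: "a \<in> carrier_vec (length ws)"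
  shows "mat_of_cols d ws *\<^sub>v a = lc d ws (\<lambda>i. a $ i)"
  by (rule eq_vecI) (use a in \<open>auto simp: lc_def mat_of_cols_def scalar_prod_def lessThan_atLeast0 mult.commute intro!: sum.cong\<close>)


lemma sum_split_at:
  fixes k d :: nat
  assumes "k \<le> d"
  shows "(\<Sum>l<d. f l) = (\<Sum>l<k. f l) + (\<Sum>l<d-k. f (l+k))"
  using assms
proof (induction d)
  case 0 thus ?case by simp
next
  case (Suc d)
  show ?case
  proof (cases "k \<le> d")
    case True
    have "Suc d - k = Suc (d - k)" using True by simp
    hence "(\<Sum>l<Suc d - k. f (l+k)) = (\<Sum>l<d-k. f (l+k)) + f d"
      using True by simp
    thus ?thesis using Suc.IH[OF True] by (simp add: add.assoc)
  next
    case False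
    hence "k = Suc d" using Suc.prems by simp
    thus ?thesis by simp
  qed
qed

lemma mat_unit_vec_entry:
  fixes A :: "complex mat"
  assumes "A \<in> carrier_mat n m" "i < n" "j < m"
  shows "(A *\<^sub>v unit_vec m j) $ i = A $$ (i,j)"
proof -
  have "(A *\<^sub>v unit_vec m j) $ i = row A i \<bullet> unit_vec m j" using assms by simp
  also have "\<dots> = row A i $ j" using assms(3) by (rule Matrix.scalar_prod_right_unit)
  also have "\<dots> = A $$ (i,j)" using assms by simp
  finally show ?thesis .
qed

lemma mat_eq_by_unit_vecs:
  fixes A :: "complex mat"
  assumes A: "A \<in> carrier_mat n m" and B: "B \<in> carrier_mat n m"
    and eq: "\<And>j. j < m \<Longrightarrow> A *\<^sub>v unit_vec m j = B *\<^sub>v unit_vec m j"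
  shows "A = B"
proof (rule eq_matI)
  fix i j assume "i < dim_row B" "j < dim_col B"
  hence i: "i < n" and j: "j < m" using B by auto
  have "A $$ (i,j) = (A *\<^sub>v unit_vec m j) $ i" using A i j by (simp add: mat_unit_vec_entry)
  also have "\<dots> = (B *\<^sub>v unit_vec m j) $ i" using eq[OF j] by simp
  also have "\<dots> = B $$ (i,j)" using B i j by (simp add: mat_unit_vec_entry)
  finally show "A $$ (i,j) = B $$ (i,j)" .
qed (use A B in auto)

lemma lc_inj:
  assumes ind: "indep d ws" and a: "a \<in> carrier_vec (length ws)" and b: "b \<in> carrier_vec (length ws)"
    and eq: "mat_of_cols d ws *\<^sub>v a = mat_of_cols d ws *\<^sub>v b"
  shows "a = b"
proof -
  have ws: "set ws \<subseteq> carrier_vec d" using ind unfolding indep_def by auto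
  have "lc d ws (\<lambda>i. a $ i - b $ i) = 0\<^sub>v d"
  proof (rule eq_vecI)
    fix j assume "j < dim_vec (0\<^sub>v d :: complex vec)" hence j: "j < d" by simp
    have "lc d ws (\<lambda>i. a $ i) $ j = lc d ws (\<lambda>i. b $ i) $ j"
      using eq mat_of_cols_mult_vec[OF ws a] mat_of_cols_mult_vec[OF ws b] by simp
    hence "(\<Sum>i<length ws. a $ i * ws ! i $ j) = (\<Sum>i<length ws. b $ i * ws ! i $ j)"
      using j by (simp add: lc_def)
    hence "(\<Sum>i<length ws. (a $ i - b $ i) * ws ! i $ j) = 0"
      by (simp only: left_diff_distrib sum_subtractf) simp
    thus "lc d ws (\<lambda>i. a $ i - b $ i) $ j = 0\<^sub>v d $ j"
      using j unfolding lc_def by simp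
  qed simp
  hence "\<forall>i<length ws. a $ i - b $ i = 0" using ind unfolding indep_def by blast
  show ?thesis
  proof (rule eq_vecI)
    fix i assume "i < dim_vec b"
    hence "i < length ws" using b by simp
    thus "a $ i = b $ i" using \<open>\<forall>i<length ws. a $ i - b $ i = 0\<close> by simp
  qed (use a b in simp)
qed

lemma basis_square:
  assumes ind: "indep d ws" and span: "carrier_vec d \<subseteq> range (lc d ws)"
  shows "length ws = d" "\<exists>Q. Q \<in> carrier_mat d d \<and> mat_of_cols d ws * Q = 1\<^sub>m d \<and> Q * mat_of_cols d ws = 1\<^sub>m d"
proof -
  let ?m = "length ws"
  let ?P = "mat_of_cols d ws"
  have ws: "set ws \<subseteq> carrier_vec d" using ind unfolding indep_def by auto
  have P: "?P \<in> carrier_mat d ?m" by simp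
  define cf where "cf j = (SOME c. lc d ws c = unit_vec d j)" for j
  have cf: "lc d ws (cf j) = unit_vec d j" for j
  proof -
    have "unit_vec d j \<in> range (lc d ws)" using span by auto
    then obtain c where "lc d ws c = unit_vec d j" by auto
    thus ?thesis unfolding cf_def by (rule someI[where P="\<lambda>c. lc d ws c = unit_vec d j"])
  qed
  define Q where "Q = mat ?m d (\<lambda>(i,j). cf j i)"
  have Q: "Q \<in> carrier_mat ?m d" unfolding Q_def by simp
  have PQ: "?P * Q = 1\<^sub>m d"
  proof (rule eq_matI)
    fix i j assume i: "i < dim_row (1\<^sub>m d :: complex mat)" and j: "j < dim_col (1\<^sub>m d :: complex mat)"
    hence i: "i < d" and j: "j < d" by auto
    have "(?P * Q) $$ (i,j) = (\<Sum>l<?m. ws ! l $ i * cf j l)"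
      using i j by (simp add: Q_def mat_of_cols_def scalar_prod_def lessThan_atLeast0)
    also have "\<dots> = lc d ws (cf j) $ i" using i by (simp add: lc_def mult.commute)
    also have "\<dots> = 1\<^sub>m d $$ (i,j)" using i j by (simp add: cf)
    finally show "(?P * Q) $$ (i,j) = 1\<^sub>m d $$ (i,j)" .
  qed (use Q in auto)
  have key: "(Q * ?P) *\<^sub>v b = b" if b: "b \<in> carrier_vec ?m" for b
  proof -
    have e1: "?P *\<^sub>v ((Q * ?P) *\<^sub>v b) = (?P * (Q * ?P)) *\<^sub>v b"
      by (rule assoc_mult_mat_vec[symmetric]) (use P Q b in auto)
    have e2: "?P * (Q * ?P) = (?P * Q) * ?P"
      by (rule assoc_mult_mat[symmetric]) (use P Q in auto)
    have e3: "?P *\<^sub>v ((Q * ?P) *\<^sub>v b) = ?P *\<^sub>v b"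
      unfolding e1 e2 PQ using P by simp
    show ?thesis by (rule lc_inj[OF ind _ b e3]) (use mult_mat_vec_carrier[OF mult_carrier_mat[OF Q P] b] in auto)
  qed
  have QP: "Q * ?P = 1\<^sub>m ?m"
  proof (rule mat_eq_by_unit_vecs)
    fix j assume j: "j < ?m"
    show "(Q * ?P) *\<^sub>v unit_vec ?m j = 1\<^sub>m ?m *\<^sub>v unit_vec ?m j"
      using key[of "unit_vec ?m j"] by simp
  qed (use Q P in auto)
  have "mat_trace (?P * Q) = mat_trace (Q * ?P)" by (rule mat_trace_mult_comm[OF P Q])
  hence "(of_nat d :: complex) = of_nat ?m" unfolding PQ QP by simp
  thus md: "?m = d" by simp
  show "\<exists>Q. Q \<in> carrier_mat d d \<and> ?P * Q = 1\<^sub>m d \<and> Q * ?P = 1\<^sub>m d"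
    using Q PQ QP md by auto
qed


lemma mat_mult_entry_sum:
  assumes "A \<in> carrier_mat n m" "B \<in> carrier_mat m p" "i < n" "j < p"
  shows "(A * B) $$ (i,j) = (\<Sum>l<m. A $$ (i,l) * B $$ (l,j))"
  using assms by (simp add: scalar_prod_def lessThan_atLeast0)

lemma rep_split:
  fixes G :: "('a, 'b) monoid_scheme"
  assumes rep: "is_rep G d \<rho>" and W: "is_subspace d W"
    and inv: "\<forall>g\<in>carrier G. \<forall>w\<in>W. \<rho> g *\<^sub>v w \<in> W"
    and W0: "W \<noteq> {0\<^sub>v d}" and Wd: "W \<noteq> carrier_vec d"
  shows "\<exists>k \<rho>1 \<rho>2. 0 < k \<and> k < d \<and> is_rep G k \<rho>1 \<and> is_rep G (d-k) \<rho>2 \<and>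
     (\<forall>g\<in>carrier G. mat_trace (\<rho> g) = mat_trace (\<rho>1 g) + mat_trace (\<rho>2 g))"
proof -
  have ind0: "indep d []" unfolding indep_def by auto
  obtain vs where vs: "indep d vs" "set vs \<subseteq> W" "W \<subseteq> range (lc d vs)"
    using max_extend[OF W ind0] by auto
  have vsc: "set vs \<subseteq> carrier_vec d" using vs(2) subspace_carrier[OF W] by auto
  obtain us where us: "indep d (vs @ us)" "carrier_vec d \<subseteq> range (lc d (vs @ us))"
    using max_extend[OF subspace_carrier_vec vs(1) vsc] by auto
  define ws where "ws = vs @ us"
  define k where "k = length vs"
  have len: "length ws = d" using basis_square(1)[OF us] unfolding ws_def .
  obtain Q where Q: "Q \<in> carrier_mat d d" and PQ: "mat_of_cols d ws * Q = 1\<^sub>m d"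
    and QP: "Q * mat_of_cols d ws = 1\<^sub>m d"
    using basis_square(2)[OF us] unfolding ws_def by blast
  define P where "P = mat_of_cols d ws"
  have P: "P \<in> carrier_mat d d" unfolding P_def using mat_of_cols_carrier(1)[of d ws] len by simp
  note PQ = PQ[folded P_def] and QP = QP[folded P_def]
  have wsc: "set ws \<subseteq> carrier_vec d" using us(1) unfolding ws_def indep_def by auto
  have kd: "k \<le> d" using len unfolding ws_def k_def by simp
  have k0: "0 < k"
  proof (rule ccontr)
    assume "\<not> 0 < k" hence "vs = []" unfolding k_def by simp
    hence "W \<subseteq> {0\<^sub>v d}" using vs(3) by (auto simp: lc_Nil)
    thus False using W0 subspace_zero[OF W] by auto
  qed
  have kd2: "k < d"
  proof (rule ccontr)
    assume "\<not> k < d" hence "us = []" using len kd unfolding ws_def k_def by simp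
    hence "carrier_vec d \<subseteq> W" using us(2) lc_in_subspace[OF W vs(2)] by auto
    thus False using Wd subspace_carrier[OF W] by auto
  qed
  have rc: "\<rho> g \<in> carrier_mat d d" if "g \<in> carrier G" for g
    using rep that unfolding is_rep_def by auto
  define R where "R g = Q * \<rho> g * P" for g
  have Rc: "R g \<in> carrier_mat d d" if "g \<in> carrier G" for g
    unfolding R_def using Q P rc[OF that] by auto
  have Rmult: "R (g \<otimes>\<^bsub>G\<^esub> h) = R g * R h" if g: "g \<in> carrier G" and h: "h \<in> carrier G" for g h
  proof -
    have "R g * R h = Q * \<rho> g * (P * Q) * \<rho> h * P"
      unfolding R_def using Q P rc[OF g] rc[OF h]
      by (simp add: assoc_mult_mat[of _ d d _ d _ d])
    also have "\<dots> = Q * (\<rho> g * \<rho> h) * P" unfolding PQ using Q P rc[OF g] rc[OF h]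
      by (simp add: assoc_mult_mat[of _ d d _ d _ d])
    finally show ?thesis unfolding R_def using rep g h unfolding is_rep_def by simp
  qed
  have R1: "R \<one>\<^bsub>G\<^esub> = 1\<^sub>m d" unfolding R_def using rep Q P QP unfolding is_rep_def by simp
  have Rtr: "mat_trace (\<rho> g) = mat_trace (R g)" if g: "g \<in> carrier G" for g
  proof -
    have "mat_trace (R g) = mat_trace (Q * (\<rho> g * P))" unfolding R_def
      using Q P rc[OF g] by (simp add: assoc_mult_mat[of _ d d _ d _ d])
    also have "\<dots> = mat_trace (\<rho> g * P * Q)"
      using Q P rc[OF g] by (subst mat_trace_mult_comm[of _ d d]) (auto simp: assoc_mult_mat[of _ d d _ d _ d])
    also have "\<rho> g * P * Q = \<rho> g" using Q P rc[OF g] PQ by (simp add: assoc_mult_mat[of _ d d _ d _ d])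
    finally show ?thesis by simp
  qed
  have Rzero: "R g $$ (j,i) = 0" if g: "g \<in> carrier G" and i: "i < k" and j1: "k \<le> j" and j2: "j < d" for g i j
  proof -
    have vi: "vs ! i \<in> W" using vs(2) i unfolding k_def by auto
    have "\<rho> g *\<^sub>v vs ! i \<in> W" using inv g vi by auto
    then obtain c where c: "\<rho> g *\<^sub>v vs ! i = lc d vs c" using vs(3) by auto
    define a where "a = vec d (\<lambda>l. if l < k then c l else 0)"
    have a: "a \<in> carrier_vec d" unfolding a_def by simp
    have Pa: "P *\<^sub>v a = lc d vs c"
    proof -
      have "P *\<^sub>v a = lc d ws (\<lambda>l. a $ l)" unfolding P_def
        using mat_of_cols_mult_vec[OF wsc] a len by simp
      also have "\<dots> = lc d vs c"
      proof (rule eq_vecI)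
        fix j assume "j < dim_vec (lc d vs c)" hence j: "j < d" by simp
        have "lc d ws (\<lambda>l. a $ l) $ j = (\<Sum>l<d. a $ l * ws ! l $ j)" using j len by (simp add: lc_def)
        also have "\<dots> = (\<Sum>l<k. a $ l * ws ! l $ j) + (\<Sum>l<d-k. a $ (l+k) * ws ! (l+k) $ j)"
          by (rule sum_split_at[OF kd])
        also have "(\<Sum>l<d-k. a $ (l+k) * ws ! (l+k) $ j) = 0"
          by (rule sum.neutral) (auto simp: a_def)
        also have "(\<Sum>l<k. a $ l * ws ! l $ j) = (\<Sum>l<k. c l * vs ! l $ j)"
          using kd by (intro sum.cong refl) (auto simp: a_def ws_def k_def nth_append)
        finally show "lc d ws (\<lambda>l. a $ l) $ j = lc d vs c $ j" using j by (simp add: lc_def k_def)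
      qed simp
      finally show ?thesis .
    qed
    have Pe: "P *\<^sub>v unit_vec d i = vs ! i"
    proof -
      have "P *\<^sub>v unit_vec d i = col P i"
        by (rule eq_vecI) (use P i kd2 in \<open>auto simp: mat_unit_vec_entry\<close>)
      also have "\<dots> = ws ! i" unfolding P_def using len i kd2 wsc by (intro col_mat_of_cols) auto
      finally show ?thesis using i unfolding ws_def k_def by (simp add: nth_append)
    qed
    have "R g $$ (j,i) = (R g *\<^sub>v unit_vec d i) $ j"
      using Rc[OF g] j2 i kd2 by (simp add: mat_unit_vec_entry)
    also have "R g *\<^sub>v unit_vec d i = Q *\<^sub>v (\<rho> g *\<^sub>v (P *\<^sub>v unit_vec d i))"
      unfolding R_def using Q P rc[OF g] by (simp add: assoc_mult_mat_vec[of _ d d _ d])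
    also have "\<dots> = Q *\<^sub>v (P *\<^sub>v a)" unfolding Pe c Pa ..
    also have "\<dots> = a" using Q P a QP by (simp add: assoc_mult_mat_vec[symmetric, of _ d d _ d])
    finally show ?thesis using j1 j2 unfolding a_def by simp
  qed
  define \<rho>1 where "\<rho>1 g = mat k k (\<lambda>(i,j). R g $$ (i,j))" for g
  define \<rho>2 where "\<rho>2 g = mat (d-k) (d-k) (\<lambda>(i,j). R g $$ (i+k,j+k))" for g
  have rep1: "is_rep G k \<rho>1"
    unfolding is_rep_def
  proof (intro conjI ballI)
    show "\<rho>1 \<one>\<^bsub>G\<^esub> = 1\<^sub>m k" unfolding \<rho>1_def R1 using kd by (intro eq_matI) auto
    fix g h assume g: "g \<in> carrier G" and h: "h \<in> carrier G"
    show "\<rho>1 (g \<otimes>\<^bsub>G\<^esub> h) = \<rho>1 g * \<rho>1 h"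
    proof (rule eq_matI)
      fix i j assume i: "i < dim_row (\<rho>1 g * \<rho>1 h)" and j: "j < dim_col (\<rho>1 g * \<rho>1 h)"
      hence i: "i < k" and j: "j < k" by (auto simp: \<rho>1_def)
      have "\<rho>1 (g \<otimes>\<^bsub>G\<^esub> h) $$ (i,j) = (R g * R h) $$ (i,j)" unfolding \<rho>1_def Rmult[OF g h] using i j by simp
      also have "\<dots> = (\<Sum>l<d. R g $$ (i,l) * R h $$ (l,j))"
        using i j kd2 by (intro mat_mult_entry_sum[OF Rc[OF g] Rc[OF h]]) auto
      also have "\<dots> = (\<Sum>l<k. R g $$ (i,l) * R h $$ (l,j)) + (\<Sum>l<d-k. R g $$ (i,l+k) * R h $$ (l+k,j))"
        by (rule sum_split_at[OF kd])
      also have "(\<Sum>l<d-k. R g $$ (i,l+k) * R h $$ (l+k,j)) = 0"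
        by (rule sum.neutral) (use Rzero[OF h j] in auto)
      also have "(\<Sum>l<k. R g $$ (i,l) * R h $$ (l,j)) = (\<rho>1 g * \<rho>1 h) $$ (i,j)"
        using i j by (simp add: \<rho>1_def scalar_prod_def lessThan_atLeast0)
      finally show "\<rho>1 (g \<otimes>\<^bsub>G\<^esub> h) $$ (i,j) = (\<rho>1 g * \<rho>1 h) $$ (i,j)" by simp
    qed (auto simp: \<rho>1_def)
  qed (auto simp: \<rho>1_def)
  have rep2: "is_rep G (d-k) \<rho>2"
    unfolding is_rep_def
  proof (intro conjI ballI)
    show "\<rho>2 \<one>\<^bsub>G\<^esub> = 1\<^sub>m (d-k)" unfolding \<rho>2_def R1 using kd by (intro eq_matI) auto
    fix g h assume g: "g \<in> carrier G" and h: "h \<in> carrier G"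
    show "\<rho>2 (g \<otimes>\<^bsub>G\<^esub> h) = \<rho>2 g * \<rho>2 h"
    proof (rule eq_matI)
      fix i j assume i: "i < dim_row (\<rho>2 g * \<rho>2 h)" and j: "j < dim_col (\<rho>2 g * \<rho>2 h)"
      hence i: "i < d-k" and j: "j < d-k" by (auto simp: \<rho>2_def)
      have "\<rho>2 (g \<otimes>\<^bsub>G\<^esub> h) $$ (i,j) = (R g * R h) $$ (i+k,j+k)" unfolding \<rho>2_def Rmult[OF g h] using i j by simp
      also have "\<dots> = (\<Sum>l<d. R g $$ (i+k,l) * R h $$ (l,j+k))"
        using i j kd2 by (intro mat_mult_entry_sum[OF Rc[OF g] Rc[OF h]]) auto
      also have "\<dots> = (\<Sum>l<k. R g $$ (i+k,l) * R h $$ (l,j+k)) + (\<Sum>l<d-k. R g $$ (i+k,l+k) * R h $$ (l+k,j+k))"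
        by (rule sum_split_at[OF kd])
      also have "(\<Sum>l<k. R g $$ (i+k,l) * R h $$ (l,j+k)) = 0"
        by (rule sum.neutral) (use Rzero[OF g] i in auto)
      also have "(\<Sum>l<d-k. R g $$ (i+k,l+k) * R h $$ (l+k,j+k)) = (\<rho>2 g * \<rho>2 h) $$ (i,j)"
        using i j by (simp add: \<rho>2_def scalar_prod_def lessThan_atLeast0)
      finally show "\<rho>2 (g \<otimes>\<^bsub>G\<^esub> h) $$ (i,j) = (\<rho>2 g * \<rho>2 h) $$ (i,j)" by simp
    qed (auto simp: \<rho>2_def)
  qed (auto simp: \<rho>2_def)
  have tr: "mat_trace (\<rho> g) = mat_trace (\<rho>1 g) + mat_trace (\<rho>2 g)" if g: "g \<in> carrier G" for g
  proof -
    have "mat_trace (\<rho> g) = mat_trace (R g)" by (rule Rtr[OF g])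
    also have "\<dots> = (\<Sum>i<d. R g $$ (i,i))" unfolding mat_trace_def using Rc[OF g] by simp
    also have "\<dots> = (\<Sum>i<k. R g $$ (i,i)) + (\<Sum>i<d-k. R g $$ (i+k,i+k))" by (rule sum_split_at[OF kd])
    finally show ?thesis unfolding mat_trace_def \<rho>1_def \<rho>2_def by simp
  qed
  show ?thesis using k0 kd2 rep1 rep2 tr by blast
qed


lemma irred_rep: "is_irred_rep G d \<rho> \<Longrightarrow> is_rep G d \<rho>"
  unfolding is_irred_rep_def by auto

lemma rep_carrier: "is_rep G d \<rho> \<Longrightarrow> g \<in> carrier G \<Longrightarrow> \<rho> g \<in> carrier_mat d d"
  unfolding is_rep_def by auto

lemma irred_subspace:
  assumes "is_irred_rep G d \<rho>" "is_subspace d W" "\<forall>g\<in>carrier G. \<forall>w\<in>W. \<rho> g *\<^sub>v w \<in> W"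
  shows "W = {0\<^sub>v d} \<or> W = carrier_vec d"
  using assms unfolding is_irred_rep_def by blast

lemma schur_scalar:
  assumes irr: "is_irred_rep G d \<rho>" and M: "M \<in> carrier_mat d d"
    and comm: "\<forall>g\<in>carrier G. M * \<rho> g = \<rho> g * M"
  shows "\<exists>c. M = c \<cdot>\<^sub>m 1\<^sub>m d"
proof -
  have d: "0 < d" using irr unfolding is_irred_rep_def by auto
  obtain lam where "lam \<in> spectrum M" using spectrum_non_empty[OF M d] by auto
  then obtain v where v: "v \<in> carrier_vec d" "v \<noteq> 0\<^sub>v d" "M *\<^sub>v v = lam \<cdot>\<^sub>v v"
    unfolding spectrum_def eigenvalue_def eigenvector_def using M by auto
  define W where "W = {w \<in> carrier_vec d. M *\<^sub>v w = lam \<cdot>\<^sub>v w}"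
  have W: "is_subspace d W" unfolding is_subspace_def W_def
  proof (intro conjI ballI allI)
    show "0\<^sub>v d \<in> {w \<in> carrier_vec d. M *\<^sub>v w = lam \<cdot>\<^sub>v w}" using M by auto
    fix x y assume x: "x \<in> {w \<in> carrier_vec d. M *\<^sub>v w = lam \<cdot>\<^sub>v w}" and y: "y \<in> {w \<in> carrier_vec d. M *\<^sub>v w = lam \<cdot>\<^sub>v w}"
    show "x + y \<in> {w \<in> carrier_vec d. M *\<^sub>v w = lam \<cdot>\<^sub>v w}"
      using x y M by (auto simp: mult_add_distrib_mat_vec smult_add_distrib_vec)
  next
    fix c x assume x: "x \<in> {w \<in> carrier_vec d. M *\<^sub>v w = lam \<cdot>\<^sub>v w}"
    show "c \<cdot>\<^sub>v x \<in> {w \<in> carrier_vec d. M *\<^sub>v w = lam \<cdot>\<^sub>v w}"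
      using x M by (auto simp: mult_mat_vec smult_smult_assoc mult.commute)
  qed auto
  have inv: "\<forall>g\<in>carrier G. \<forall>w\<in>W. \<rho> g *\<^sub>v w \<in> W"
  proof (intro ballI)
    fix g w assume g: "g \<in> carrier G" and w: "w \<in> W"
    have rg: "\<rho> g \<in> carrier_mat d d" using rep_carrier[OF irred_rep[OF irr] g] .
    have wc: "w \<in> carrier_vec d" and Mw: "M *\<^sub>v w = lam \<cdot>\<^sub>v w" using w unfolding W_def by auto
    have "M *\<^sub>v (\<rho> g *\<^sub>v w) = (M * \<rho> g) *\<^sub>v w" using M rg wc by (simp add: assoc_mult_mat_vec)
    also have "\<dots> = (\<rho> g * M) *\<^sub>v w" using comm g by simp
    also have "\<dots> = \<rho> g *\<^sub>v (lam \<cdot>\<^sub>v w)" using M rg wc Mw by (simp add: assoc_mult_mat_vec)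
    also have "\<dots> = lam \<cdot>\<^sub>v (\<rho> g *\<^sub>v w)" using rg wc by (simp add: mult_mat_vec)
    finally show "\<rho> g *\<^sub>v w \<in> W" unfolding W_def using rg wc by auto
  qed
  have "v \<in> W" using v unfolding W_def by auto
  hence "W \<noteq> {0\<^sub>v d}" using v by auto
  hence Wd: "W = carrier_vec d" using irred_subspace[OF irr W inv] by auto
  have "M = lam \<cdot>\<^sub>m 1\<^sub>m d"
  proof (rule mat_eq_by_unit_vecs[OF M])
    fix j assume j: "j < d"
    have "unit_vec d j \<in> W" using Wd j by simp
    hence "M *\<^sub>v unit_vec d j = lam \<cdot>\<^sub>v unit_vec d j" unfolding W_def by auto
    also have "\<dots> = (lam \<cdot>\<^sub>m 1\<^sub>m d) *\<^sub>v unit_vec d j"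
    proof (rule eq_vecI)
      fix i assume "i < dim_vec ((lam \<cdot>\<^sub>m 1\<^sub>m d) *\<^sub>v unit_vec d j)"
      hence i: "i < d" by simp
      have "((lam \<cdot>\<^sub>m 1\<^sub>m d) *\<^sub>v unit_vec d j) $ i = (lam \<cdot>\<^sub>m 1\<^sub>m d) $$ (i,j)"
        using i j by (intro mat_unit_vec_entry) auto
      thus "(lam \<cdot>\<^sub>v unit_vec d j) $ i = ((lam \<cdot>\<^sub>m 1\<^sub>m d) *\<^sub>v unit_vec d j) $ i"
        using i j by simp
    qed simp
    finally show "M *\<^sub>v unit_vec d j = (lam \<cdot>\<^sub>m 1\<^sub>m d) *\<^sub>v unit_vec d j" .
  qed simp
  thus ?thesis by blast
qed


lemma intertwine_char_eq:
  assumes irr1: "is_irred_rep G d \<rho>" and irr2: "is_irred_rep G e \<psi>"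
    and A: "A \<in> carrier_mat e d" and A0: "A \<noteq> 0\<^sub>m e d"
    and comm: "\<forall>h\<in>carrier G. \<psi> h * A = A * \<rho> h"
  shows "\<forall>h\<in>carrier G. mat_trace (\<psi> h) = mat_trace (\<rho> h)"
proof -
  have rc: "\<rho> h \<in> carrier_mat d d" if "h \<in> carrier G" for h using rep_carrier[OF irred_rep[OF irr1] that] .
  have pc: "\<psi> h \<in> carrier_mat e e" if "h \<in> carrier G" for h using rep_carrier[OF irred_rep[OF irr2] that] .
  define K where "K = {v \<in> carrier_vec d. A *\<^sub>v v = 0\<^sub>v e}"
  have K: "is_subspace d K" unfolding is_subspace_def K_def
  proof (intro conjI ballI allI)
    fix x y assume x: "x \<in> {v \<in> carrier_vec d. A *\<^sub>v v = 0\<^sub>v e}" and y: "y \<in> {v \<in> carrier_vec d. A *\<^sub>v v = 0\<^sub>v e}"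
    show "x + y \<in> {v \<in> carrier_vec d. A *\<^sub>v v = 0\<^sub>v e}"
      using x y A by (auto simp: mult_add_distrib_mat_vec)
  next
    fix c x assume x: "x \<in> {v \<in> carrier_vec d. A *\<^sub>v v = 0\<^sub>v e}"
    show "c \<cdot>\<^sub>v x \<in> {v \<in> carrier_vec d. A *\<^sub>v v = 0\<^sub>v e}"
      using x A by (auto simp: mult_mat_vec)
  qed (use A in auto)
  have Kinv: "\<forall>g\<in>carrier G. \<forall>w\<in>K. \<rho> g *\<^sub>v w \<in> K"
  proof (intro ballI)
    fix g w assume g: "g \<in> carrier G" and w: "w \<in> K"
    have wc: "w \<in> carrier_vec d" and Aw: "A *\<^sub>v w = 0\<^sub>v e" using w unfolding K_def by auto
    have "A *\<^sub>v (\<rho> g *\<^sub>v w) = (A * \<rho> g) *\<^sub>v w" using A rc[OF g] wc by (simp add: assoc_mult_mat_vec)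
    also have "\<dots> = (\<psi> g * A) *\<^sub>v w" using comm g by simp
    also have "\<dots> = \<psi> g *\<^sub>v (A *\<^sub>v w)" using A pc[OF g] wc by (simp add: assoc_mult_mat_vec)
    also have "\<dots> = 0\<^sub>v e" unfolding Aw using pc[OF g] by auto
    finally show "\<rho> g *\<^sub>v w \<in> K" unfolding K_def using rc[OF g] wc by auto
  qed
  have "K \<noteq> carrier_vec d"
  proof
    assume Kd: "K = carrier_vec d"
    have "A = 0\<^sub>m e d"
    proof (rule mat_eq_by_unit_vecs[OF A])
      fix j assume j: "j < d"
      have "unit_vec d j \<in> K" using Kd j by simp
      thus "A *\<^sub>v unit_vec d j = 0\<^sub>m e d *\<^sub>v unit_vec d j" unfolding K_def by auto
    qed simp
    with A0 show False ..
  qed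
  hence K0: "K = {0\<^sub>v d}" using irred_subspace[OF irr1 K Kinv] by auto
  define I where "I = {A *\<^sub>v v | v. v \<in> carrier_vec d}"
  have I: "is_subspace e I" unfolding is_subspace_def I_def
  proof (intro conjI ballI allI)
    show "{A *\<^sub>v v |v. v \<in> carrier_vec d} \<subseteq> carrier_vec e" using A by auto
    show "0\<^sub>v e \<in> {A *\<^sub>v v |v. v \<in> carrier_vec d}" using A by (auto intro!: exI[of _ "0\<^sub>v d"])
    fix x y assume x: "x \<in> {A *\<^sub>v v |v. v \<in> carrier_vec d}" and y: "y \<in> {A *\<^sub>v v |v. v \<in> carrier_vec d}"
    then obtain a b where "x = A *\<^sub>v a" "y = A *\<^sub>v b" "a \<in> carrier_vec d" "b \<in> carrier_vec d" by auto
    thus "x + y \<in> {A *\<^sub>v v |v. v \<in> carrier_vec d}"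
      using A by (auto simp: mult_add_distrib_mat_vec[symmetric] intro!: exI[of _ "a + b"])
  next
    fix c x assume x: "x \<in> {A *\<^sub>v v |v. v \<in> carrier_vec d}"
    then obtain a where "x = A *\<^sub>v a" "a \<in> carrier_vec d" by auto
    thus "c \<cdot>\<^sub>v x \<in> {A *\<^sub>v v |v. v \<in> carrier_vec d}"
      using A by (auto simp: mult_mat_vec[symmetric] intro!: exI[of _ "c \<cdot>\<^sub>v a"])
  qed
  have Iinv: "\<forall>g\<in>carrier G. \<forall>w\<in>I. \<psi> g *\<^sub>v w \<in> I"
  proof (intro ballI)
    fix g w assume g: "g \<in> carrier G" and w: "w \<in> I"
    then obtain a where a: "a \<in> carrier_vec d" and w: "w = A *\<^sub>v a" unfolding I_def by auto
    have "\<psi> g *\<^sub>v w = (\<psi> g * A) *\<^sub>v a" unfolding w using A pc[OF g] a by (simp add: assoc_mult_mat_vec)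
    also have "\<dots> = (A * \<rho> g) *\<^sub>v a" using comm g by simp
    also have "\<dots> = A *\<^sub>v (\<rho> g *\<^sub>v a)" using A rc[OF g] a by (simp add: assoc_mult_mat_vec)
    finally show "\<psi> g *\<^sub>v w \<in> I" unfolding I_def using rc[OF g] a by auto
  qed
  have "I \<noteq> {0\<^sub>v e}"
  proof
    assume I0: "I = {0\<^sub>v e}"
    have "A = 0\<^sub>m e d"
    proof (rule mat_eq_by_unit_vecs[OF A])
      fix j assume j: "j < d"
      have "A *\<^sub>v unit_vec d j \<in> I" unfolding I_def using j by auto
      thus "A *\<^sub>v unit_vec d j = 0\<^sub>m e d *\<^sub>v unit_vec d j" using I0 by auto
    qed simp
    with A0 show False ..
  qed
  hence Ie: "I = carrier_vec e" using irred_subspace[OF irr2 I Iinv] by auto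
  define b where "b j = (SOME v. v \<in> carrier_vec d \<and> A *\<^sub>v v = unit_vec e j)" for j
  have b: "b j \<in> carrier_vec d \<and> A *\<^sub>v b j = unit_vec e j" if j: "j < e" for j
  proof -
    have "unit_vec e j \<in> I" using Ie by simp
    then obtain v where "v \<in> carrier_vec d \<and> A *\<^sub>v v = unit_vec e j" unfolding I_def by auto
    thus ?thesis unfolding b_def by (rule someI)
  qed
  define B where "B = mat d e (\<lambda>(i,j). b j $ i)"
  have B: "B \<in> carrier_mat d e" unfolding B_def by simp
  have AB: "A * B = 1\<^sub>m e"
  proof (rule mat_eq_by_unit_vecs)
    fix j assume j: "j < e"
    have "B *\<^sub>v unit_vec e j = b j"
      by (rule eq_vecI) (use B j b[OF j] in \<open>auto simp: mat_unit_vec_entry B_def\<close>)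
    thus "(A * B) *\<^sub>v unit_vec e j = 1\<^sub>m e *\<^sub>v unit_vec e j"
      using A B j b[OF j] by (simp add: assoc_mult_mat_vec)
  qed (use A B in auto)
  have BA: "B * A = 1\<^sub>m d"
  proof (rule mat_eq_by_unit_vecs)
    fix j assume j: "j < d"
    let ?u = "unit_vec d j"
    have "A *\<^sub>v ((B * A) *\<^sub>v ?u) = A *\<^sub>v (B *\<^sub>v (A *\<^sub>v ?u))"
      using A B by (simp add: assoc_mult_mat_vec)
    also have "\<dots> = (A * B) *\<^sub>v (A *\<^sub>v ?u)"
      using A B by (simp add: assoc_mult_mat_vec)
    also have "\<dots> = A *\<^sub>v ?u" unfolding AB using A by simp
    finally have eq: "A *\<^sub>v ((B * A) *\<^sub>v ?u) = A *\<^sub>v ?u" .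
    define x where "x = (B * A) *\<^sub>v ?u"
    have xc: "x \<in> carrier_vec d" unfolding x_def using A B by auto
    have uc: "?u \<in> carrier_vec d" by simp
    have "A *\<^sub>v (x - ?u) = A *\<^sub>v x - A *\<^sub>v ?u"
      by (rule mult_minus_distrib_mat_vec[OF A xc uc])
    also have "\<dots> = 0\<^sub>v e" unfolding x_def eq
      by (rule eq_vecI) (use A in auto)
    finally have "x - ?u \<in> K" unfolding K_def using xc uc by auto
    hence z: "x - ?u = 0\<^sub>v d" using K0 by auto
    have "x = ?u"
    proof (rule eq_vecI)
      fix i assume "i < dim_vec ?u" hence i: "i < d" by simp
      have "(x - ?u) $ i = 0" using z i by simp
      thus "x $ i = ?u $ i" using i xc by simp
    qed (use xc in simp)
    hence "(B * A) *\<^sub>v ?u = ?u" unfolding x_def .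
    thus "(B * A) *\<^sub>v ?u = 1\<^sub>m d *\<^sub>v ?u" by simp
  qed (use A B in auto)
  show ?thesis
  proof
    fix h assume h: "h \<in> carrier G"
    have "mat_trace (\<psi> h) = mat_trace (\<psi> h * (A * B))" unfolding AB using pc[OF h] by simp
    also have "\<psi> h * (A * B) = (A * \<rho> h) * B" using pc[OF h] A B comm h by (simp add: assoc_mult_mat[symmetric])
    also have "mat_trace \<dots> = mat_trace (B * (A * \<rho> h))"
      using A B rc[OF h] by (intro mat_trace_mult_comm[of _ e d]) auto
    also have "B * (A * \<rho> h) = \<rho> h" using A B rc[OF h] BA by (simp add: assoc_mult_mat[symmetric])
    finally show "mat_trace (\<psi> h) = mat_trace (\<rho> h)" .
  qed
qed


lemma sum_group_left:
  fixes G (structure)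
  assumes G: "group G" and h: "h \<in> carrier G"
  shows "(\<Sum>g\<in>carrier G. f (h \<otimes>\<^bsub>G\<^esub> g)) = (\<Sum>g\<in>carrier G. f g)"
proof -
  interpret group G by (rule G)
  have "bij_betw (\<lambda>g. h \<otimes> g) (carrier G) (carrier G)"
    unfolding bij_betw_def
  proof
    show "inj_on ((\<otimes>) h) (carrier G)" using h by (auto simp: inj_on_def)
    show "(\<otimes>) h ` carrier G = carrier G"
    proof
      show "carrier G \<subseteq> (\<otimes>) h ` carrier G"
      proof
        fix y assume y: "y \<in> carrier G"
        have "y = h \<otimes> (inv h \<otimes> y)" using h y by (simp add: m_assoc[symmetric])
        thus "y \<in> (\<otimes>) h ` carrier G" using h y by blast
      qed
    qed (use h in auto)
  qed
  thus ?thesis by (rule sum.reindex_bij_betw)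
qed

lemma sum_group_inv:
  fixes G (structure)
  assumes G: "group G"
  shows "(\<Sum>g\<in>carrier G. f (inv\<^bsub>G\<^esub> g)) = (\<Sum>g\<in>carrier G. f g)"
proof -
  interpret group G by (rule G)
  have "bij_betw (\<lambda>g. inv g) (carrier G) (carrier G)"
    unfolding bij_betw_def
  proof
    show "inj_on (m_inv G) (carrier G)" by (auto simp: inj_on_def)
    show "m_inv G ` carrier G = carrier G"
    proof
      show "carrier G \<subseteq> m_inv G ` carrier G"
      proof
        fix y assume y: "y \<in> carrier G"
        have "y = inv (inv y)" using y by simp
        thus "y \<in> m_inv G ` carrier G" using y by blast
      qed
    qed auto
  qed
  thus ?thesis by (rule sum.reindex_bij_betw)
qed

lemma rep_mult_entry:
  assumes rep: "is_rep G d \<rho>" and g: "g \<in> carrier G" and h: "h \<in> carrier G" and i: "i < d" and j: "j < d"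
  shows "\<rho> (g \<otimes>\<^bsub>G\<^esub> h) $$ (i,j) = (\<Sum>l<d. \<rho> g $$ (i,l) * \<rho> h $$ (l,j))"
proof -
  have "\<rho> (g \<otimes>\<^bsub>G\<^esub> h) = \<rho> g * \<rho> h" using rep g h unfolding is_rep_def by auto
  thus ?thesis using mat_mult_entry_sum[OF rep_carrier[OF rep g] rep_carrier[OF rep h] i j] by simp
qed

lemma rep_inv:
  fixes G (structure)
  assumes G: "group G" and rep: "is_rep G d \<rho>" and g: "g \<in> carrier G"
  shows "\<rho> (inv\<^bsub>G\<^esub> g) * \<rho> g = 1\<^sub>m d" "\<rho> g * \<rho> (inv\<^bsub>G\<^esub> g) = 1\<^sub>m d"
proof -
  interpret group G by (rule G)
  show "\<rho> (inv g) * \<rho> g = 1\<^sub>m d" using rep g unfolding is_rep_def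
    by (metis inv_closed l_inv)
  show "\<rho> g * \<rho> (inv g) = 1\<^sub>m d" using rep g unfolding is_rep_def
    by (metis inv_closed r_inv)
qed

lemma char_class:
  fixes G (structure)
  assumes G: "group G" and rep: "is_rep G d \<rho>" and g: "g \<in> carrier G" and y: "y \<in> carrier G"
  shows "character G \<rho> (g \<otimes>\<^bsub>G\<^esub> y \<otimes>\<^bsub>G\<^esub> inv\<^bsub>G\<^esub> g) = character G \<rho> y"
proof -
  interpret group G by (rule G)
  have rc: "\<rho> x \<in> carrier_mat d d" if "x \<in> carrier G" for x using rep_carrier[OF rep that] .
  have "\<rho> (g \<otimes> y \<otimes> inv g) = \<rho> g * (\<rho> y * \<rho> (inv g))"
    using rep g y unfolding is_rep_def using rc g y
    by (simp add: assoc_mult_mat[of _ d d _ d _ d])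
  moreover have "mat_trace (\<rho> g * (\<rho> y * \<rho> (inv g))) = mat_trace ((\<rho> y * \<rho> (inv g)) * \<rho> g)"
    by (rule mat_trace_mult_comm[of _ d d]) (use rc[OF g] rc[OF y] rc[OF inv_closed[OF g]] in auto)
  ultimately have "mat_trace (\<rho> (g \<otimes> y \<otimes> inv g)) = mat_trace ((\<rho> y * \<rho> (inv g)) * \<rho> g)"
    by simp
  also have "(\<rho> y * \<rho> (inv g)) * \<rho> g = \<rho> y" using rc[OF g] rc[OF y] rc[OF inv_closed[OF g]] rep_inv[OF G rep g]
    by (simp add: assoc_mult_mat[of _ d d _ d _ d])
  finally show ?thesis unfolding character_def using g y by simp
qed

definition pairing :: "('a, 'b) monoid_scheme \<Rightarrow> ('a \<Rightarrow> complex) \<Rightarrow> ('a \<Rightarrow> complex) \<Rightarrow> complex" where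
  "pairing G f h = (\<Sum>g\<in>carrier G. f g * h (inv\<^bsub>G\<^esub> g))"

lemma avg_intertwines:
  fixes G (structure)
  assumes G: "group G" and fin: "finite (carrier G)"
    and rep1: "is_rep G d \<rho>" and rep2: "is_rep G e \<psi>" and i: "i < d" and j: "j < e"
  defines "A \<equiv> mat e d (\<lambda>(a,b). \<Sum>g\<in>carrier G. \<psi> g $$ (a,j) * \<rho> (inv\<^bsub>G\<^esub> g) $$ (i,b))"
  shows "\<forall>h\<in>carrier G. \<psi> h * A = A * \<rho> h"
proof
  interpret group G by (rule G)
  fix h assume h: "h \<in> carrier G"
  have rc: "\<rho> x \<in> carrier_mat d d" if "x \<in> carrier G" for x using rep_carrier[OF rep1 that] .
  have pc: "\<psi> x \<in> carrier_mat e e" if "x \<in> carrier G" for x using rep_carrier[OF rep2 that] .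
  have Ac: "A \<in> carrier_mat e d" unfolding A_def by simp
  show "\<psi> h * A = A * \<rho> h"
  proof (rule eq_matI)
    fix a b assume "a < dim_row (A * \<rho> h)" "b < dim_col (A * \<rho> h)"
    hence a: "a < e" and b: "b < d" using Ac rc[OF h] by auto
    have "(\<psi> h * A) $$ (a,b) = (\<Sum>c<e. \<psi> h $$ (a,c) * (\<Sum>g\<in>carrier G. \<psi> g $$ (c,j) * \<rho> (inv g) $$ (i,b)))"
      unfolding mat_mult_entry_sum[OF pc[OF h] Ac a b] by (intro sum.cong refl) (use b in \<open>simp add: A_def\<close>)
    also have "\<dots> = (\<Sum>g\<in>carrier G. (\<Sum>c<e. \<psi> h $$ (a,c) * \<psi> g $$ (c,j)) * \<rho> (inv g) $$ (i,b))"
      by (simp add: sum_distrib_left sum_distrib_right mult.assoc sum.swap[of _ "{..<e}"])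
    also have "\<dots> = (\<Sum>g\<in>carrier G. \<psi> (h \<otimes> g) $$ (a,j) * \<rho> (inv g) $$ (i,b))"
      using rep_mult_entry[OF rep2 h _ a j] by simp
    finally have L: "(\<psi> h * A) $$ (a,b) = (\<Sum>g\<in>carrier G. \<psi> (h \<otimes> g) $$ (a,j) * \<rho> (inv g) $$ (i,b))" .
    have "(A * \<rho> h) $$ (a,b) = (\<Sum>c<d. (\<Sum>g\<in>carrier G. \<psi> g $$ (a,j) * \<rho> (inv g) $$ (i,c)) * \<rho> h $$ (c,b))"
      unfolding mat_mult_entry_sum[OF Ac rc[OF h] a b] by (intro sum.cong refl) (use a in \<open>simp add: A_def\<close>)
    also have "\<dots> = (\<Sum>g\<in>carrier G. \<psi> g $$ (a,j) * (\<Sum>c<d. \<rho> (inv g) $$ (i,c) * \<rho> h $$ (c,b)))"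
      by (simp add: sum_distrib_left sum_distrib_right mult.assoc sum.swap[of _ "{..<d}"])
    also have "\<dots> = (\<Sum>g\<in>carrier G. \<psi> g $$ (a,j) * \<rho> (inv g \<otimes> h) $$ (i,b))"
      using rep_mult_entry[OF rep1 _ h i b] by simp
    also have "\<dots> = (\<Sum>g\<in>carrier G. \<psi> (h \<otimes> g) $$ (a,j) * \<rho> (inv (h \<otimes> g) \<otimes> h) $$ (i,b))"
      using sum_group_left[OF G h, of "\<lambda>g. \<psi> g $$ (a,j) * \<rho> (inv g \<otimes> h) $$ (i,b)"] by simp
    also have "\<dots> = (\<Sum>g\<in>carrier G. \<psi> (h \<otimes> g) $$ (a,j) * \<rho> (inv g) $$ (i,b))"
    proof (intro sum.cong refl)
      fix g assume g: "g \<in> carrier G"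
      have "inv (h \<otimes> g) \<otimes> h = inv g" using g h by (simp add: inv_mult_group m_assoc)
      thus "\<psi> (h \<otimes> g) $$ (a,j) * \<rho> (inv (h \<otimes> g) \<otimes> h) $$ (i,b) = \<psi> (h \<otimes> g) $$ (a,j) * \<rho> (inv g) $$ (i,b)" by simp
    qed
    finally show "(\<psi> h * A) $$ (a,b) = (A * \<rho> h) $$ (a,b)" using L by simp
  qed (use Ac rc[OF h] pc[OF h] in auto)
qed


lemma pairing_char_expand:
  fixes G (structure)
  assumes G: "group G" and rep1: "is_rep G d \<rho>" and rep2: "is_rep G e \<psi>"
  shows "pairing G (character G \<psi>) (character G \<rho>) =
    (\<Sum>j<e. \<Sum>i<d. \<Sum>g\<in>carrier G. \<psi> g $$ (j,j) * \<rho> (inv\<^bsub>G\<^esub> g) $$ (i,i))"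
proof -
  interpret group G by (rule G)
  have rc: "\<rho> x \<in> carrier_mat d d" if "x \<in> carrier G" for x using rep_carrier[OF rep1 that] .
  have pc: "\<psi> x \<in> carrier_mat e e" if "x \<in> carrier G" for x using rep_carrier[OF rep2 that] .
  have "pairing G (character G \<psi>) (character G \<rho>) =
     (\<Sum>g\<in>carrier G. (\<Sum>j<e. \<psi> g $$ (j,j)) * (\<Sum>i<d. \<rho> (inv g) $$ (i,i)))"
    unfolding pairing_def character_def mat_trace_def
  proof (intro sum.cong refl)
    fix g assume g: "g \<in> carrier G"
    have "dim_row (\<psi> g) = e" using pc[OF g] by simp
    moreover have "dim_row (\<rho> (inv g)) = d" using rc[OF inv_closed[OF g]] by simp
    ultimately show "(if g \<in> carrier G then \<Sum>i<dim_row (\<psi> g). \<psi> g $$ (i, i) else 0) *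
      (if inv g \<in> carrier G then \<Sum>i<dim_row (\<rho> (inv g)). \<rho> (inv g) $$ (i, i) else 0) =
      (\<Sum>j<e. \<psi> g $$ (j, j)) * (\<Sum>i<d. \<rho> (inv g) $$ (i, i))" using g by simp
  qed
  also have "\<dots> = (\<Sum>g\<in>carrier G. \<Sum>j<e. \<Sum>i<d. \<psi> g $$ (j,j) * \<rho> (inv g) $$ (i,i))"
    by (simp only: sum_product)
  also have "\<dots> = (\<Sum>j<e. \<Sum>i<d. \<Sum>g\<in>carrier G. \<psi> g $$ (j,j) * \<rho> (inv g) $$ (i,i))"
    by (subst sum.swap) (simp add: sum.swap[of _ "carrier G"])
  finally show ?thesis .
qed

lemma orth_distinct:
  assumes G: "group G" and fin: "finite (carrier G)"
    and irr1: "is_irred_rep G d \<rho>" and irr2: "is_irred_rep G e \<psi>"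
    and ne: "character G \<psi> \<noteq> character G \<rho>"
  shows "pairing G (character G \<psi>) (character G \<rho>) = 0"
proof -
  have rep1: "is_rep G d \<rho>" and rep2: "is_rep G e \<psi>" using irr1 irr2 by (auto dest: irred_rep)
  have z: "(\<Sum>g\<in>carrier G. \<psi> g $$ (j,j) * \<rho> (inv\<^bsub>G\<^esub> g) $$ (i,i)) = 0" if i: "i < d" and j: "j < e" for i j
  proof -
    define A where "A = mat e d (\<lambda>(a,b). \<Sum>g\<in>carrier G. \<psi> g $$ (a,j) * \<rho> (inv\<^bsub>G\<^esub> g) $$ (i,b))"
    have comm: "\<forall>h\<in>carrier G. \<psi> h * A = A * \<rho> h"
      unfolding A_def by (rule avg_intertwines[OF G fin rep1 rep2 i j])
    have A: "A \<in> carrier_mat e d" unfolding A_def by simp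
    have "A = 0\<^sub>m e d"
    proof (rule ccontr)
      assume "A \<noteq> 0\<^sub>m e d"
      from intertwine_char_eq[OF irr1 irr2 A this comm]
      have "character G \<psi> = character G \<rho>" unfolding character_def by auto
      with ne show False ..
    qed
    hence "A $$ (j,i) = 0" using i j by simp
    thus ?thesis using i j unfolding A_def by simp
  qed
  show ?thesis unfolding pairing_char_expand[OF G rep1 rep2] using z by simp
qed

lemma orth_self:
  fixes G (structure)
  assumes G: "group G" and fin: "finite (carrier G)" and irr: "is_irred_rep G d \<rho>"
  shows "pairing G (character G \<rho>) (character G \<rho>) = of_nat (card (carrier G))"
proof -
  interpret group G by (rule G)
  have rep: "is_rep G d \<rho>" using irr by (rule irred_rep)
  have d0: "0 < d" using irr unfolding is_irred_rep_def by auto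
  have rc: "\<rho> x \<in> carrier_mat d d" if "x \<in> carrier G" for x using rep_carrier[OF rep that] .
  let ?N = "of_nat (card (carrier G)) :: complex"
  have val: "(\<Sum>g\<in>carrier G. \<rho> g $$ (j,j) * \<rho> (inv g) $$ (i,i)) = (if i = j then ?N / of_nat d else 0)"
    if i: "i < d" and j: "j < d" for i j
  proof -
    define A where "A = mat d d (\<lambda>(a,b). \<Sum>g\<in>carrier G. \<rho> g $$ (a,j) * \<rho> (inv g) $$ (i,b))"
    have comm: "\<forall>h\<in>carrier G. \<rho> h * A = A * \<rho> h"
      unfolding A_def by (rule avg_intertwines[OF G fin rep rep i j])
    have A: "A \<in> carrier_mat d d" unfolding A_def by simp
    obtain c where c: "A = c \<cdot>\<^sub>m 1\<^sub>m d" using schur_scalar[OF irr A] comm by metis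
    have "mat_trace A = (\<Sum>a<d. \<Sum>g\<in>carrier G. \<rho> g $$ (a,j) * \<rho> (inv g) $$ (i,a))"
      unfolding mat_trace_def A_def by simp
    also have "\<dots> = (\<Sum>g\<in>carrier G. \<Sum>a<d. \<rho> (inv g) $$ (i,a) * \<rho> g $$ (a,j))"
      by (subst sum.swap) (simp add: mult.commute)
    also have "\<dots> = (\<Sum>g\<in>carrier G. (\<rho> (inv g) * \<rho> g) $$ (i,j))"
    proof (intro sum.cong refl)
      fix g assume g: "g \<in> carrier G"
      show "(\<Sum>a<d. \<rho> (inv g) $$ (i,a) * \<rho> g $$ (a,j)) = (\<rho> (inv g) * \<rho> g) $$ (i,j)"
        using mat_mult_entry_sum[OF rc[OF inv_closed[OF g]] rc[OF g] i j] by simp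
    qed
    also have "\<dots> = (\<Sum>g\<in>carrier G. (1\<^sub>m d :: complex mat) $$ (i,j))"
      by (intro sum.cong refl) (use rep_inv[OF G rep] in auto)
    also have "\<dots> = (if i = j then ?N else 0)" using i j by simp
    finally have trA: "mat_trace A = (if i = j then ?N else 0)" .
    have "mat_trace A = c * of_nat d" unfolding c mat_trace_def by simp
    hence cval: "c = (if i = j then ?N / of_nat d else 0)" using trA d0
      by (auto simp: field_simps split: if_splits)
    have "A $$ (j,i) = (if i = j then c else 0)" unfolding c using i j by auto
    thus ?thesis using i j cval unfolding A_def by auto
  qed
  have "pairing G (character G \<rho>) (character G \<rho>) = (\<Sum>j<d. \<Sum>i<d. if i = j then ?N / of_nat d else 0)"
    unfolding pairing_char_expand[OF G rep rep] using val by simp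
  also have "\<dots> = of_nat d * (?N / of_nat d)" by simp
  also have "\<dots> = ?N" using d0 by simp
  finally show ?thesis .
qed

lemma Irr_orth:
  assumes G: "group G" and fin: "finite (carrier G)" and \<psi>: "\<psi> \<in> Irr G" and \<chi>: "\<chi> \<in> Irr G"
  shows "pairing G \<psi> \<chi> = (if \<psi> = \<chi> then of_nat (card (carrier G)) else 0)"
proof -
  obtain \<rho> d where \<rho>: "is_irred_rep G d \<rho>" and \<chi>d: "\<chi> = character G \<rho>" using \<chi> unfolding Irr_def by auto
  obtain \<sigma> e where \<sigma>: "is_irred_rep G e \<sigma>" and \<psi>d: "\<psi> = character G \<sigma>" using \<psi> unfolding Irr_def by auto
  show ?thesis
  proof (cases "\<psi> = \<chi>")
    case True thus ?thesis using orth_self[OF G fin \<rho>] \<chi>d by simp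
  next
    case False thus ?thesis using orth_distinct[OF G fin \<rho> \<sigma>] \<chi>d \<psi>d by simp
  qed
qed


lemma char_zero_dim: "g \<in> carrier G \<Longrightarrow> is_rep G 0 \<rho> \<Longrightarrow> character G \<rho> g = 0"
  unfolding character_def mat_trace_def using rep_carrier by fastforce

lemma rep_char_sum_zero:
  assumes G: "group G" and fin: "finite (carrier G)"
    and hyp: "\<forall>\<chi>\<in>Irr G. (\<Sum>g\<in>carrier G. u g * \<chi> g) = 0"
  shows "is_rep G d \<rho> \<Longrightarrow> (\<Sum>g\<in>carrier G. u g * character G \<rho> g) = 0"
proof (induction d arbitrary: \<rho> rule: less_induct)
  case (less d)
  show ?case
  proof (cases "is_irred_rep G d \<rho>")
    case True
    hence "character G \<rho> \<in> Irr G" unfolding Irr_def by auto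
    thus ?thesis using hyp by blast
  next
    case False
    show ?thesis
    proof (cases "d = 0")
      case True
      hence r0: "is_rep G 0 \<rho>" using less.prems by simp
      show ?thesis by (intro sum.neutral ballI) (simp add: char_zero_dim[OF _ r0])
    next
      case d0: False
      from False d0 less.prems obtain W where W: "is_subspace d W"
        and inv: "\<forall>g\<in>carrier G. \<forall>w\<in>W. \<rho> g *\<^sub>v w \<in> W" and W0: "W \<noteq> {0\<^sub>v d}" and Wd: "W \<noteq> carrier_vec d"
        unfolding is_irred_rep_def by auto
      obtain k \<rho>1 \<rho>2 where k: "0 < k" "k < d" and r1: "is_rep G k \<rho>1" and r2: "is_rep G (d-k) \<rho>2"
        and tr: "\<forall>g\<in>carrier G. mat_trace (\<rho> g) = mat_trace (\<rho>1 g) + mat_trace (\<rho>2 g)"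
        using rep_split[OF less.prems W inv W0 Wd] by blast
      have "(\<Sum>g\<in>carrier G. u g * character G \<rho> g) =
          (\<Sum>g\<in>carrier G. u g * character G \<rho>1 g) + (\<Sum>g\<in>carrier G. u g * character G \<rho>2 g)"
        unfolding sum.distrib[symmetric] by (intro sum.cong refl) (simp add: character_def tr distrib_left)
      also have "\<dots> = 0" using less.IH[OF k(2) r1] less.IH[of "d-k" \<rho>2] r2 k by simp
      finally show ?thesis .
    qed
  qed
qed

lemma regular_rep:
  fixes G (structure)
  assumes G: "group G" and fin: "finite (carrier G)"
  shows "\<exists>\<rho>. is_rep G (card (carrier G)) \<rho> \<and>
    (\<forall>g\<in>carrier G. character G \<rho> g = (if g = \<one>\<^bsub>G\<^esub> then of_nat (card (carrier G)) else 0))"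
proof -
  interpret group G by (rule G)
  let ?N = "card (carrier G)"
  obtain e where e: "bij_betw e {0..<?N} (carrier G)" using ex_bij_betw_nat_finite[OF fin] by blast
  have ec: "e i \<in> carrier G" if "i < ?N" for i using e that unfolding bij_betw_def by auto
  have einj: "e i = e j \<longleftrightarrow> i = j" if "i < ?N" "j < ?N" for i j
    using e that unfolding bij_betw_def inj_on_def by auto
  have esurj: "\<exists>l<?N. e l = y" if "y \<in> carrier G" for y
    using e that unfolding bij_betw_def by (metis atLeastLessThan_iff imageE)
  define R where "R g = mat ?N ?N (\<lambda>(i,j). if e i = g \<otimes> e j then 1 else (0::complex))" for g
  have rep: "is_rep G ?N R" unfolding is_rep_def
  proof (intro conjI ballI)
    show "R \<one> = 1\<^sub>m ?N" unfolding R_def by (intro eq_matI) (auto simp: ec einj)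
    fix g h assume g: "g \<in> carrier G" and h: "h \<in> carrier G"
    show "R (g \<otimes> h) = R g * R h"
    proof (rule eq_matI)
      fix i j assume "i < dim_row (R g * R h)" "j < dim_col (R g * R h)"
      hence i: "i < ?N" and j: "j < ?N" unfolding R_def by auto
      obtain l0 where l0: "l0 < ?N" "e l0 = h \<otimes> e j" using esurj[of "h \<otimes> e j"] h ec[OF j] by auto
      have "(R g * R h) $$ (i,j) = (\<Sum>l<?N. (if e i = g \<otimes> e l then 1 else 0) * (if e l = h \<otimes> e j then 1 else 0))"
        unfolding R_def using i j by (simp add: scalar_prod_def lessThan_atLeast0)
      also have "\<dots> = (\<Sum>l<?N. if l = l0 then (if e i = g \<otimes> (h \<otimes> e j) then 1 else 0) else 0)"
      proof (intro sum.cong refl)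
        fix l assume l: "l \<in> {..<?N}"
        show "(if e i = g \<otimes> e l then 1 else 0) * (if e l = h \<otimes> e j then 1 else 0) =
          (if l = l0 then (if e i = g \<otimes> (h \<otimes> e j) then 1 else 0) else (0::complex))"
        proof (cases "l = l0")
          case True thus ?thesis using l0 by simp
        next
          case False
          hence "e l \<noteq> e l0" using einj[of l l0] l l0(1) by auto
          thus ?thesis using False l0 by simp
        qed
      qed
      also have "\<dots> = (if e i = g \<otimes> (h \<otimes> e j) then 1 else 0)" using l0 by simp
      also have "\<dots> = R (g \<otimes> h) $$ (i,j)" unfolding R_def using i j g h ec[OF j] by (simp add: m_assoc)
      finally show "R (g \<otimes> h) $$ (i,j) = (R g * R h) $$ (i,j)" by simp
    qed (auto simp: R_def)
  qed (auto simp: R_def)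
  have ch: "character G R g = (if g = \<one> then of_nat ?N else 0)" if g: "g \<in> carrier G" for g
  proof -
    have "character G R g = (\<Sum>i<?N. if e i = g \<otimes> e i then 1 else 0)"
      unfolding character_def mat_trace_def R_def using g by simp
    also have "\<dots> = (\<Sum>i<?N. if g = \<one> then 1 else 0)"
    proof (intro sum.cong refl)
      fix i assume "i \<in> {..<?N}"
      hence i: "e i \<in> carrier G" using ec by auto
      have "e i = g \<otimes> e i \<longleftrightarrow> g = \<one>" using i g by simp
      thus "(if e i = g \<otimes> e i then 1 else 0) = (if g = \<one> then 1 else (0::complex))" by simp
    qed
    finally show ?thesis by simp
  qed
  show ?thesis using rep ch by blast
qed

lemma sum_group_conj:
  fixes G (structure)
  assumes G: "group G" and h: "h \<in> carrier G"
  shows "(\<Sum>g\<in>carrier G. f (h \<otimes>\<^bsub>G\<^esub> g \<otimes>\<^bsub>G\<^esub> inv\<^bsub>G\<^esub> h)) = (\<Sum>g\<in>carrier G. f g)"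
proof -
  interpret group G by (rule G)
  have "bij_betw (\<lambda>g. h \<otimes> g \<otimes> inv h) (carrier G) (carrier G)"
    unfolding bij_betw_def
  proof
    show "inj_on (\<lambda>g. h \<otimes> g \<otimes> inv h) (carrier G)" using h by (auto simp: inj_on_def)
    show "(\<lambda>g. h \<otimes> g \<otimes> inv h) ` carrier G = carrier G"
    proof
      show "carrier G \<subseteq> (\<lambda>g. h \<otimes> g \<otimes> inv h) ` carrier G"
      proof
        fix y assume y: "y \<in> carrier G"
        have a: "h \<otimes> (inv h \<otimes> z) = z" if "z \<in> carrier G" for z
          using h that by (simp add: m_assoc[symmetric])
        have b: "z \<otimes> h \<otimes> inv h = z" if "z \<in> carrier G" for z
          using h that by (simp add: m_assoc)
        have "h \<otimes> (inv h \<otimes> y \<otimes> h) \<otimes> inv h = h \<otimes> (inv h \<otimes> (y \<otimes> h)) \<otimes> inv h"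
          using h y by (simp add: m_assoc)
        also have "\<dots> = (y \<otimes> h) \<otimes> inv h" using a[of "y \<otimes> h"] h y by simp
        also have "\<dots> = y" using b[OF y] .
        finally have "y = h \<otimes> (inv h \<otimes> y \<otimes> h) \<otimes> inv h" by simp
        thus "y \<in> (\<lambda>g. h \<otimes> g \<otimes> inv h) ` carrier G" using h y by blast
      qed
    qed (use h in auto)
  qed
  thus ?thesis by (rule sum.reindex_bij_betw)
qed

lemma completeness:
  fixes G (structure)
  assumes G: "group G" and fin: "finite (carrier G)"
    and cls: "\<forall>g\<in>carrier G. \<forall>y\<in>carrier G. f (g \<otimes>\<^bsub>G\<^esub> y \<otimes>\<^bsub>G\<^esub> inv\<^bsub>G\<^esub> g) = f y"
    and orth: "\<forall>\<chi>\<in>Irr G. (\<Sum>g\<in>carrier G. f g * \<chi> g) = 0"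
  shows "\<forall>g\<in>carrier G. f g = 0"
proof -
  interpret group G by (rule G)
  have T0: "(\<Sum>g\<in>carrier G. f g * \<rho> g $$ (a,b)) = 0"
    if irr: "is_irred_rep G d \<rho>" and a: "a < d" and b: "b < d" for d \<rho> a b
  proof -
    have rep: "is_rep G d \<rho>" using irr by (rule irred_rep)
    have rc: "\<rho> x \<in> carrier_mat d d" if "x \<in> carrier G" for x using rep_carrier[OF rep that] .
    define T where "T = mat d d (\<lambda>(a,b). \<Sum>g\<in>carrier G. f g * \<rho> g $$ (a,b))"
    have Tc: "T \<in> carrier_mat d d" unfolding T_def by simp
    have comm: "\<forall>h\<in>carrier G. T * \<rho> h = \<rho> h * T"
    proof
      fix h assume h: "h \<in> carrier G"
      show "T * \<rho> h = \<rho> h * T"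
      proof (rule eq_matI)
        fix i j assume "i < dim_row (\<rho> h * T)" "j < dim_col (\<rho> h * T)"
        hence i: "i < d" and j: "j < d" using rc[OF h] Tc by auto
        have "(T * \<rho> h) $$ (i,j) = (\<Sum>c<d. (\<Sum>g\<in>carrier G. f g * \<rho> g $$ (i,c)) * \<rho> h $$ (c,j))"
          unfolding mat_mult_entry_sum[OF Tc rc[OF h] i j] by (intro sum.cong refl) (use i in \<open>simp add: T_def\<close>)
        also have "\<dots> = (\<Sum>g\<in>carrier G. f g * (\<Sum>c<d. \<rho> g $$ (i,c) * \<rho> h $$ (c,j)))"
          by (simp add: sum_distrib_left sum_distrib_right mult.assoc sum.swap[of _ "{..<d}"])
        also have "\<dots> = (\<Sum>g\<in>carrier G. f g * \<rho> (g \<otimes> h) $$ (i,j))"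
          using rep_mult_entry[OF rep _ h i j] by simp
        also have "\<dots> = (\<Sum>g\<in>carrier G. f (h \<otimes> g \<otimes> inv h) * \<rho> (h \<otimes> g \<otimes> inv h \<otimes> h) $$ (i,j))"
          using sum_group_conj[OF G h, of "\<lambda>g. f g * \<rho> (g \<otimes> h) $$ (i,j)"] by simp
        also have "\<dots> = (\<Sum>g\<in>carrier G. f g * \<rho> (h \<otimes> g) $$ (i,j))"
          by (intro sum.cong refl) (use cls h in \<open>auto simp: m_assoc\<close>)
        also have "\<dots> = (\<Sum>g\<in>carrier G. (\<Sum>c<d. \<rho> h $$ (i,c) * \<rho> g $$ (c,j)) * f g)"
          using rep_mult_entry[OF rep h _ i j] by (simp add: mult.commute)
        also have "\<dots> = (\<Sum>g\<in>carrier G. \<Sum>c<d. \<rho> h $$ (i,c) * (f g * \<rho> g $$ (c,j)))"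
          by (intro sum.cong refl) (simp add: sum_distrib_left sum_distrib_right mult_ac)
        also have "\<dots> = (\<Sum>c<d. \<Sum>g\<in>carrier G. \<rho> h $$ (i,c) * (f g * \<rho> g $$ (c,j)))"
          by (rule sum.swap)
        also have "\<dots> = (\<Sum>c<d. \<rho> h $$ (i,c) * (\<Sum>g\<in>carrier G. f g * \<rho> g $$ (c,j)))"
          by (simp add: sum_distrib_left)
        also have "\<dots> = (\<rho> h * T) $$ (i,j)"
          unfolding mat_mult_entry_sum[OF rc[OF h] Tc i j] by (intro sum.cong refl) (use j in \<open>simp add: T_def\<close>)
        finally show "(T * \<rho> h) $$ (i,j) = (\<rho> h * T) $$ (i,j)" .
      qed (use Tc rc[OF h] in auto)
    qed
    obtain c where c: "T = c \<cdot>\<^sub>m 1\<^sub>m d" using schur_scalar[OF irr Tc comm] by blast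
    have d0: "0 < d" using a by simp
    have "mat_trace T = (\<Sum>g\<in>carrier G. f g * character G \<rho> g)"
      unfolding T_def mat_trace_def character_def
      by (simp add: sum_distrib_left sum.swap[of _ "carrier G"])
        (intro sum.cong refl, use rc in \<open>auto dest: carrier_matD\<close>)
    also have "\<dots> = 0" using orth irr unfolding Irr_def by auto
    finally have "c * of_nat d = 0" unfolding c mat_trace_def by auto
    hence "c = 0" using d0 by simp
    hence "T $$ (a,b) = 0" unfolding c using a b by simp
    thus ?thesis unfolding T_def using a b by simp
  qed
  define u where "u k = (\<Sum>a\<in>carrier G. cnj (f (inv a)) * f (inv a \<otimes> k))" for k
  have hyp: "\<forall>\<chi>\<in>Irr G. (\<Sum>k\<in>carrier G. u k * \<chi> k) = 0"
  proof
    fix \<chi> assume "\<chi> \<in> Irr G"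
    then obtain d \<rho> where irr: "is_irred_rep G d \<rho>" and \<chi>: "\<chi> = character G \<rho>" unfolding Irr_def by auto
    have rep: "is_rep G d \<rho>" using irr by (rule irred_rep)
    have inner: "(\<Sum>b\<in>carrier G. f b * \<chi> (a \<otimes> b)) = 0" if a: "a \<in> carrier G" for a
    proof -
      have "(\<Sum>b\<in>carrier G. f b * \<chi> (a \<otimes> b)) = (\<Sum>b\<in>carrier G. f b * (\<Sum>i<d. \<Sum>l<d. \<rho> a $$ (i,l) * \<rho> b $$ (l,i)))"
      proof (intro sum.cong refl)
        fix b assume b: "b \<in> carrier G"
        have ab: "a \<otimes> b \<in> carrier G" using a b by simp
        have "\<chi> (a \<otimes> b) = (\<Sum>i<d. \<rho> (a \<otimes> b) $$ (i,i))"
          unfolding \<chi> character_def mat_trace_def using ab rep_carrier[OF rep ab] by simp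
        also have "\<dots> = (\<Sum>i<d. \<Sum>l<d. \<rho> a $$ (i,l) * \<rho> b $$ (l,i))"
          by (intro sum.cong refl) (use rep_mult_entry[OF rep a b] in simp)
        finally show "f b * \<chi> (a \<otimes> b) = f b * (\<Sum>i<d. \<Sum>l<d. \<rho> a $$ (i,l) * \<rho> b $$ (l,i))" by simp
      qed
      also have "\<dots> = (\<Sum>i<d. \<Sum>l<d. \<rho> a $$ (i,l) * (\<Sum>b\<in>carrier G. f b * \<rho> b $$ (l,i)))"
        by (simp add: sum_distrib_left sum_distrib_right mult.assoc mult.left_commute sum.swap[of _ "carrier G"])
      also have "\<dots> = 0" using T0[OF irr] by simp
      finally show ?thesis .
    qed
    have "(\<Sum>k\<in>carrier G. u k * \<chi> k) = (\<Sum>a\<in>carrier G. cnj (f (inv a)) * (\<Sum>k\<in>carrier G. f (inv a \<otimes> k) * \<chi> k))"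
      unfolding u_def
    proof -
      have "(\<Sum>k\<in>carrier G. (\<Sum>a\<in>carrier G. cnj (f (inv a)) * f (inv a \<otimes> k)) * \<chi> k) =
          (\<Sum>k\<in>carrier G. \<Sum>a\<in>carrier G. cnj (f (inv a)) * (f (inv a \<otimes> k) * \<chi> k))"
        by (simp add: sum_distrib_right mult.assoc)
      also have "\<dots> = (\<Sum>a\<in>carrier G. \<Sum>k\<in>carrier G. cnj (f (inv a)) * (f (inv a \<otimes> k) * \<chi> k))"
        by (rule sum.swap)
      also have "\<dots> = (\<Sum>a\<in>carrier G. cnj (f (inv a)) * (\<Sum>k\<in>carrier G. f (inv a \<otimes> k) * \<chi> k))"
        by (simp add: sum_distrib_left)
      finally show "(\<Sum>k\<in>carrier G. (\<Sum>a\<in>carrier G. cnj (f (inv a)) * f (inv a \<otimes> k)) * \<chi> k) =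
          (\<Sum>a\<in>carrier G. cnj (f (inv a)) * (\<Sum>k\<in>carrier G. f (inv a \<otimes> k) * \<chi> k))" .
    qed
    also have "\<dots> = (\<Sum>a\<in>carrier G. cnj (f (inv a)) * (\<Sum>b\<in>carrier G. f b * \<chi> (a \<otimes> b)))"
    proof (intro sum.cong refl)
      fix a assume a: "a \<in> carrier G"
      have "(\<Sum>k\<in>carrier G. f (inv a \<otimes> k) * \<chi> k) = (\<Sum>b\<in>carrier G. f (inv a \<otimes> (a \<otimes> b)) * \<chi> (a \<otimes> b))"
        using sum_group_left[OF G a, of "\<lambda>k. f (inv a \<otimes> k) * \<chi> k"] by simp
      also have "\<dots> = (\<Sum>b\<in>carrier G. f b * \<chi> (a \<otimes> b))"
        by (intro sum.cong refl) (use a in \<open>simp add: m_assoc[symmetric]\<close>)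
      finally show "cnj (f (inv a)) * (\<Sum>k\<in>carrier G. f (inv a \<otimes> k) * \<chi> k) = cnj (f (inv a)) * (\<Sum>b\<in>carrier G. f b * \<chi> (a \<otimes> b))" by simp
    qed
    also have "\<dots> = 0" using inner by simp
    finally show "(\<Sum>k\<in>carrier G. u k * \<chi> k) = 0" .
  qed
  obtain R where R: "is_rep G (card (carrier G)) R"
    and chR: "\<forall>g\<in>carrier G. character G R g = (if g = \<one> then of_nat (card (carrier G)) else 0)"
    using regular_rep[OF G fin] by blast
  have "(\<Sum>k\<in>carrier G. u k * character G R k) = 0" using rep_char_sum_zero[OF G fin hyp R] .
  moreover have "(\<Sum>k\<in>carrier G. u k * character G R k) = (\<Sum>k\<in>carrier G. if k = \<one> then u \<one> * of_nat (card (carrier G)) else 0)"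
    by (intro sum.cong refl) (use chR in auto)
  moreover have "\<dots> = u \<one> * of_nat (card (carrier G))" using fin by simp
  moreover have "card (carrier G) > 0" using fin one_closed by (auto simp: card_gt_0_iff)
  ultimately have u1: "u \<one> = 0" by simp
  have "u \<one> = (\<Sum>a\<in>carrier G. complex_of_real ((cmod (f (inv a)))^2))"
    unfolding u_def
  proof (intro sum.cong refl)
    fix a assume a: "a \<in> carrier G"
    have "inv a \<otimes> \<one> = inv a" using a by simp
    thus "cnj (f (inv a)) * f (inv a \<otimes> \<one>) = complex_of_real ((cmod (f (inv a)))^2)"
      by (metis complex_norm_square mult.commute)
  qed
  also have "\<dots> = complex_of_real (\<Sum>g\<in>carrier G. (cmod (f g))^2)"
  proof -
    have "(\<Sum>a\<in>carrier G. complex_of_real ((cmod (f (inv a)))^2)) = complex_of_real (\<Sum>a\<in>carrier G. (cmod (f (inv a)))^2)"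
      by (rule of_real_sum[symmetric])
    also have "(\<Sum>a\<in>carrier G. (cmod (f (inv a)))^2) = (\<Sum>g\<in>carrier G. (cmod (f g))^2)"
      by (rule sum_group_inv[OF G])
    finally show ?thesis .
  qed
  finally have X: "u \<one> = complex_of_real (\<Sum>g\<in>carrier G. (cmod (f g))^2)" .
  have "(\<Sum>g\<in>carrier G. (cmod (f g))^2) = 0" using X u1 by (metis of_real_eq_0_iff)
  hence "\<forall>g\<in>carrier G. (cmod (f g))^2 = 0" using fin by (simp add: sum_nonneg_eq_0_iff)
  thus ?thesis by simp
qed


lemma exponent_props:
  fixes G (structure)
  assumes G: "group G" and fin: "finite (carrier G)"
  shows "0 < group_exponent G" "\<forall>x\<in>carrier G. x [^] group_exponent G = \<one>"
proof -
  interpret group G by (rule G)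
  have ex: "\<exists>n::nat. 0 < n \<and> (\<forall>x\<in>carrier G. x [^] n = \<one>)"
  proof (intro exI conjI)
    show "0 < order G" unfolding order_def using fin one_closed by (auto simp: card_gt_0_iff)
    show "\<forall>x\<in>carrier G. x [^] order G = \<one>" using pow_order_eq_1 by blast
  qed
  have "0 < group_exponent G \<and> (\<forall>x\<in>carrier G. x [^] group_exponent G = \<one>)"
    unfolding group_exponent_def by (rule LeastI_ex[OF ex])
  thus "0 < group_exponent G" "\<forall>x\<in>carrier G. x [^] group_exponent G = \<one>" by auto
qed

lemma upper_tri_mult:
  fixes X Y :: "complex mat"
  assumes X: "X \<in> carrier_mat d d" and Y: "Y \<in> carrier_mat d d"
    and uX: "upper_triangular X" and uY: "upper_triangular Y"
  shows "upper_triangular (X * Y)" "\<And>i. i < d \<Longrightarrow> (X * Y) $$ (i,i) = X $$ (i,i) * Y $$ (i,i)"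
proof -
  have X0: "X $$ (i,l) = 0" if "l < i" "i < d" for i l using uX that X unfolding upper_triangular_def by auto
  have Y0: "Y $$ (i,l) = 0" if "l < i" "i < d" for i l using uY that Y unfolding upper_triangular_def by auto
  show "upper_triangular (X * Y)"
    unfolding upper_triangular_def
  proof (intro allI impI)
    fix i j assume i: "i < dim_row (X * Y)" and j: "j < i"
    hence i: "i < d" using X by simp
    have "(X * Y) $$ (i,j) = (\<Sum>l<d. X $$ (i,l) * Y $$ (l,j))"
      by (rule mat_mult_entry_sum[OF X Y i]) (use i j in simp)
    also have "\<dots> = 0"
    proof (rule sum.neutral, intro ballI)
      fix l assume l: "l \<in> {..<d}"
      show "X $$ (i,l) * Y $$ (l,j) = 0"
      proof (cases "l < i")
        case True thus ?thesis using X0[OF True i] by simp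
      next
        case False thus ?thesis using Y0[of j l] j l by simp
      qed
    qed
    finally show "(X * Y) $$ (i,j) = 0" .
  qed
  fix i assume i: "i < d"
  have "(X * Y) $$ (i,i) = (\<Sum>l<d. X $$ (i,l) * Y $$ (l,i))"
    by (rule mat_mult_entry_sum[OF X Y i i])
  also have "\<dots> = (\<Sum>l<d. if l = i then X $$ (i,i) * Y $$ (i,i) else 0)"
  proof (intro sum.cong refl)
    fix l assume l: "l \<in> {..<d}"
    show "X $$ (i,l) * Y $$ (l,i) = (if l = i then X $$ (i,i) * Y $$ (i,i) else 0)"
    proof (cases "l < i")
      case True thus ?thesis using X0[OF True i] by simp
    next
      case False
      show ?thesis
      proof (cases "l = i")
        case False': False
        hence "i < l" using False by simp
        thus ?thesis using Y0[of i l] l False' by simp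
      qed simp
    qed
  qed
  also have "\<dots> = X $$ (i,i) * Y $$ (i,i)" using i by simp
  finally show "(X * Y) $$ (i,i) = X $$ (i,i) * Y $$ (i,i)" .
qed

lemma upper_tri_pow:
  fixes B :: "complex mat"
  assumes B: "B \<in> carrier_mat d d" and uB: "upper_triangular B"
  shows "upper_triangular (B ^\<^sub>m k) \<and> (\<forall>i<d. (B ^\<^sub>m k) $$ (i,i) = (B $$ (i,i)) ^ k)"
proof (induction k)
  case 0
  show ?case using B by auto
next
  case (Suc k)
  have Bk: "B ^\<^sub>m k \<in> carrier_mat d d" using B by (rule pow_carrier_mat)
  have "B ^\<^sub>m Suc k = B ^\<^sub>m k * B" by simp
  thus ?case using upper_tri_mult[OF Bk B _ uB] Suc by auto
qed

lemma triangularize: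
  fixes A :: "complex mat"
  assumes A: "A \<in> carrier_mat d d"
  shows "\<exists>B P Q. B \<in> carrier_mat d d \<and> upper_triangular B \<and> similar_mat_wit A B P Q"
proof -
  obtain es where "char_poly A = (\<Prod>a\<leftarrow>es. [:- a, 1:])" using char_poly_factorized[OF A] by blast
  from schur_decomposition_exists[OF A this] obtain B where B: "B \<in> carrier_mat d d" "upper_triangular B" "similar_mat A B"
    by blast
  thus ?thesis unfolding similar_mat_def by blast
qed

lemma rep_pow:
  fixes G (structure)
  assumes G: "group G" and rep: "is_rep G d \<rho>" and g: "g \<in> carrier G"
  shows "\<rho> (g [^] k) = \<rho> g ^\<^sub>m k"
proof (induction k)
  case 0
  show ?case using rep rep_carrier[OF rep g] unfolding is_rep_def by simp
next
  case (Suc k)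
  interpret group G by (rule G)
  have "\<rho> (g [^] Suc k) = \<rho> (g [^] k) * \<rho> g"
    using rep g unfolding is_rep_def by (simp add: nat_pow_Suc)
  thus ?case using Suc by simp
qed

lemma char_eigen:
  fixes G (structure)
  assumes G: "group G" and rep: "is_rep G d \<rho>" and g: "g \<in> carrier G"
    and gn: "g [^] n = \<one>"
  shows "\<exists>lam. (\<forall>i<d. lam i ^ n = 1) \<and> (\<forall>k. mat_trace (\<rho> (g [^] k)) = (\<Sum>i<d. lam i ^ k))"
proof -
  interpret group G by (rule G)
  have A: "\<rho> g \<in> carrier_mat d d" using rep_carrier[OF rep g] .
  obtain B P Q where B: "B \<in> carrier_mat d d" and uB: "upper_triangular B"
    and wit: "similar_mat_wit (\<rho> g) B P Q" using triangularize[OF A] by blast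
  have dA: "dim_row (\<rho> g) = d" using A by simp
  note w = similar_mat_witD[OF dA[symmetric] wit]
  have pw: "\<rho> g ^\<^sub>m k = P * B ^\<^sub>m k * Q" for k by (rule similar_mat_wit_pow_id[OF wit])
  have Bk: "B ^\<^sub>m k \<in> carrier_mat d d" for k using B by (rule pow_carrier_mat)
  have tr: "mat_trace (\<rho> g ^\<^sub>m k) = mat_trace (B ^\<^sub>m k)" for k
  proof -
    have "mat_trace (\<rho> g ^\<^sub>m k) = mat_trace (P * (B ^\<^sub>m k * Q))"
      unfolding pw using w(6,7) Bk[of k] by (simp add: assoc_mult_mat[of _ d d _ d _ d])
    also have "\<dots> = mat_trace ((B ^\<^sub>m k * Q) * P)"
      by (rule mat_trace_mult_comm) (use w(6,7) Bk[of k] in auto)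
    also have "(B ^\<^sub>m k * Q) * P = B ^\<^sub>m k" using w(2,6,7) Bk[of k] by (simp add: assoc_mult_mat[of _ d d _ d _ d] right_mult_one_mat[OF Bk[of k]])
    finally show ?thesis .
  qed
  define lam where "lam i = B $$ (i,i)" for i
  have diag: "(B ^\<^sub>m k) $$ (i,i) = lam i ^ k" if "i < d" for i k
    using upper_tri_pow[OF B uB, of k] that unfolding lam_def by auto
  have Bn: "B ^\<^sub>m n = 1\<^sub>m d"
  proof -
    have "\<rho> g ^\<^sub>m n = 1\<^sub>m d" using rep_pow[OF G rep g, of n] gn rep unfolding is_rep_def by simp
    hence "P * B ^\<^sub>m n * Q = 1\<^sub>m d" using pw by simp
    hence "Q * (P * B ^\<^sub>m n * Q) * P = Q * 1\<^sub>m d * P" by simp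
    also have "Q * (P * B ^\<^sub>m n * Q) * P = (Q * P) * B ^\<^sub>m n * (Q * P)"
      using w(6,7) Bk[of n] by (simp add: assoc_mult_mat[of _ d d _ d _ d])
    finally show ?thesis using w(2,6,7) Bk[of n] by (simp add: right_mult_one_mat[OF Bk[of n]] left_mult_one_mat[OF Bk[of n]])
  qed
  show ?thesis
  proof (intro exI conjI allI impI)
    fix i assume i: "i < d"
    show "lam i ^ n = 1" using diag[OF i, of n] Bn i by simp
  next
    fix k
    have "mat_trace (\<rho> (g [^] k)) = mat_trace (B ^\<^sub>m k)" using rep_pow[OF G rep g] tr by simp
    also have "\<dots> = (\<Sum>i<d. lam i ^ k)" unfolding mat_trace_def
      by (intro sum.cong) (use B Bk[of k] diag in auto)
    finally show "mat_trace (\<rho> (g [^] k)) = (\<Sum>i<d. lam i ^ k)" .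
  qed
qed

lemma root_unity_pow:
  assumes n: "0 < n" and z: "z ^ n = (1::complex)"
  shows "\<exists>m. z = prim_root n ^ m"
proof -
  have "z \<in> {z. z ^ n = 1}" using z by simp
  then obtain k where "z = cis (2 * pi * real k / real n)"
    using bij_betw_roots_unity[OF n] unfolding bij_betw_def by auto
  also have "\<dots> = cis (real k * (2 * pi / real n))" by (simp add: field_simps)
  also have "\<dots> = prim_root n ^ k" unfolding prim_root_def by (simp add: DeMoivre)
  finally show ?thesis by blast
qed

lemma cyc_pow: "prim_root n ^ m \<in> cyclotomic_field n"
  unfolding cyclotomic_field_def
  by (rule CollectI, rule exI[of _ "Polynomial.monom 1 m"]) (simp add: poly_monom coeff_monom)

lemma cyc_add:
  assumes "a \<in> cyclotomic_field n" "b \<in> cyclotomic_field n"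
  shows "a + b \<in> cyclotomic_field n"
proof -
  obtain p where p: "a = poly p (prim_root n)" "\<forall>i. Polynomial.coeff p i \<in> \<rat>" using assms(1) unfolding cyclotomic_field_def by auto
  obtain q where q: "b = poly q (prim_root n)" "\<forall>i. Polynomial.coeff q i \<in> \<rat>" using assms(2) unfolding cyclotomic_field_def by auto
  show ?thesis unfolding cyclotomic_field_def
    by (rule CollectI, rule exI[of _ "p + q"]) (use p q in auto)
qed

lemma cyc_zero: "0 \<in> cyclotomic_field n"
  unfolding cyclotomic_field_def by (rule CollectI, rule exI[of _ 0]) simp

lemma gal_pow:
  assumes \<sigma>: "is_galois_auto n \<sigma>" and r: "\<sigma> (prim_root n) = prim_root n ^ r"
  shows "\<sigma> (prim_root n ^ m) = prim_root n ^ (r * m)"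
proof (induction m)
  case 0 thus ?case using \<sigma> unfolding is_galois_auto_def by simp
next
  case (Suc m)
  have "\<sigma> (prim_root n ^ Suc m) = \<sigma> (prim_root n ^ m * prim_root n)" by (simp add: mult.commute)
  also have "\<dots> = \<sigma> (prim_root n ^ m) * \<sigma> (prim_root n)"
    using \<sigma> cyc_pow[of n m] cyc_pow[of n 1] unfolding is_galois_auto_def by simp
  finally show ?case using Suc r by (simp add: power_add power_mult algebra_simps)
qed

lemma gal_sum:
  fixes d :: nat and m :: "nat \<Rightarrow> nat"
  assumes \<sigma>: "is_galois_auto n \<sigma>"
  shows "\<sigma> (\<Sum>i<d. prim_root n ^ m i) = (\<Sum>i<d. \<sigma> (prim_root n ^ m i))"
    and "(\<Sum>i<d. prim_root n ^ m i) \<in> cyclotomic_field n"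
proof -
  have "(\<Sum>i<d. prim_root n ^ m i) \<in> cyclotomic_field n \<and> \<sigma> (\<Sum>i<d. prim_root n ^ m i) = (\<Sum>i<d. \<sigma> (prim_root n ^ m i))"
  proof (induction d)
    case 0
    have "\<sigma> 0 = \<sigma> (0 + 0)" by simp
    also have "\<dots> = \<sigma> 0 + \<sigma> 0" using \<sigma> cyc_zero unfolding is_galois_auto_def by blast
    finally have "\<sigma> 0 = 0" by simp
    thus ?case using cyc_zero by simp
  next
    case (Suc d)
    have "\<sigma> (\<Sum>i<Suc d. prim_root n ^ m i) = \<sigma> ((\<Sum>i<d. prim_root n ^ m i) + prim_root n ^ m d)" by simp
    also have "\<dots> = \<sigma> (\<Sum>i<d. prim_root n ^ m i) + \<sigma> (prim_root n ^ m d)"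
      using \<sigma> Suc cyc_pow unfolding is_galois_auto_def by blast
    finally show ?case using Suc cyc_add cyc_pow by simp
  qed
  thus "\<sigma> (\<Sum>i<d. prim_root n ^ m i) = (\<Sum>i<d. \<sigma> (prim_root n ^ m i))"
    "(\<Sum>i<d. prim_root n ^ m i) \<in> cyclotomic_field n" by auto
qed


lemma char_gal:
  fixes G (structure)
  assumes G: "group G" and fin: "finite (carrier G)"
    and n: "n = group_exponent G" and \<sigma>: "is_galois_auto n \<sigma>"
    and r: "\<sigma> (prim_root n) = prim_root n ^ r"
    and \<chi>: "\<chi> \<in> Irr G" and g: "g \<in> carrier G"
  shows "\<sigma> (\<chi> g) = \<chi> (g [^] r)" "cnj (\<chi> g) = \<chi> (inv g)"
proof -
  interpret group G by (rule G)
  obtain d \<rho> where irr: "is_irred_rep G d \<rho>" and \<chi>d: "\<chi> = character G \<rho>" using \<chi> unfolding Irr_def by auto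
  have rep: "is_rep G d \<rho>" using irr by (rule irred_rep)
  have n0: "0 < n" and gn: "g [^] n = \<one>" using exponent_props[OF G fin] g n by auto
  obtain lam where lam1: "\<forall>i<d. lam i ^ n = 1" and lamk: "\<forall>k. mat_trace (\<rho> (g [^] k)) = (\<Sum>i<d. lam i ^ k)"
    using char_eigen[OF G rep g gn] by blast
  define m where "m i = (SOME m. lam i = prim_root n ^ m)" for i
  have lm: "lam i = prim_root n ^ m i" if i: "i < d" for i
  proof -
    have "\<exists>m. lam i = prim_root n ^ m" using root_unity_pow[OF n0] lam1 i by blast
    thus ?thesis unfolding m_def by (rule someI_ex)
  qed
  have chik: "\<chi> (g [^] k) = (\<Sum>i<d. lam i ^ k)" for k
    unfolding \<chi>d character_def using lamk g by simp
  have g1: "g [^] (Suc 0) = g" using g by simp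
  have chig: "\<chi> g = (\<Sum>i<d. prim_root n ^ m i)"
    using chik[of "Suc 0"] lm unfolding g1 by simp
  show "\<sigma> (\<chi> g) = \<chi> (g [^] r)"
  proof -
    have "\<sigma> (\<chi> g) = (\<Sum>i<d. \<sigma> (prim_root n ^ m i))" unfolding chig by (rule gal_sum(1)[OF \<sigma>])
    also have "\<dots> = (\<Sum>i<d. lam i ^ r)"
      by (intro sum.cong refl) (simp add: gal_pow[OF \<sigma> r] lm flip: power_mult, simp add: mult.commute)
    also have "\<dots> = \<chi> (g [^] r)" using chik by simp
    finally show ?thesis .
  qed
  show "cnj (\<chi> g) = \<chi> (inv g)"
  proof -
    have cl: "cnj (lam i) = lam i ^ (n - 1)" if i: "i < d" for i
    proof -
      have ln: "lam i ^ n = 1" using lam1 i by simp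
      hence "norm (lam i) = 1" using power_eq_1_iff[OF ln] n0 by simp
      hence c1: "lam i * cnj (lam i) = 1" using complex_norm_square[of "lam i"] by simp
      have c2: "lam i * lam i ^ (n - 1) = 1" using ln n0 by (metis Suc_diff_1 power_Suc)
      have "lam i \<noteq> 0" using c1 by auto
      thus ?thesis using c1 c2 by (metis mult_left_cancel)
    qed
    have ig: "inv g = g [^] (n - 1)"
    proof (rule inv_equality)
      show "g [^] (n - 1) \<otimes> g = \<one>" using gn n0 g by (metis Suc_diff_1 nat_pow_Suc)
    qed (use g in auto)
    have "cnj (\<chi> g) = (\<Sum>i<d. cnj (lam i))" using chik[of "Suc 0"] unfolding g1 by simp
    also have "\<dots> = (\<Sum>i<d. lam i ^ (n - 1))" by (intro sum.cong refl) (use cl in simp)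
    also have "\<dots> = \<chi> (inv g)" unfolding ig using chik by simp
    finally show ?thesis .
  qed
qed


lemma conj_class_sub:
  fixes G (structure)
  assumes G: "group G" and x: "x \<in> carrier G"
  shows "conj_class G x \<subseteq> carrier G"
proof -
  interpret group G by (rule G)
  show ?thesis unfolding conj_class_def using x by auto
qed

lemma conj_class_self:
  fixes G (structure)
  assumes G: "group G" and x: "x \<in> carrier G"
  shows "x \<in> conj_class G x"
proof -
  interpret group G by (rule G)
  have "x = \<one> \<otimes> x \<otimes> inv \<one>" using x by simp
  thus ?thesis unfolding conj_class_def by blast
qed

lemma conj_class_conj:
  fixes G (structure)
  assumes G: "group G" and x: "x \<in> carrier G" and g: "g \<in> carrier G" and w: "w \<in> carrier G"
  shows "g \<otimes> w \<otimes> inv g \<in> conj_class G x \<longleftrightarrow> w \<in> conj_class G x"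
proof -
  interpret group G by (rule G)
  show ?thesis
  proof
    assume "g \<otimes> w \<otimes> inv g \<in> conj_class G x"
    then obtain h where h: "h \<in> carrier G" and e: "g \<otimes> w \<otimes> inv g = h \<otimes> x \<otimes> inv h"
      unfolding conj_class_def by auto
    have "w = inv g \<otimes> (g \<otimes> w \<otimes> inv g) \<otimes> g" using g w by (simp add: m_assoc[symmetric]) (simp add: m_assoc)
    also have "\<dots> = inv g \<otimes> (h \<otimes> x \<otimes> inv h) \<otimes> g" unfolding e ..
    also have "\<dots> = (inv g \<otimes> h) \<otimes> x \<otimes> inv (inv g \<otimes> h)"
      using g h x by (simp add: m_assoc inv_mult_group)
    finally show "w \<in> conj_class G x" unfolding conj_class_def using g h by blast
  next
    assume "w \<in> conj_class G x"
    then obtain h where h: "h \<in> carrier G" and e: "w = h \<otimes> x \<otimes> inv h"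
      unfolding conj_class_def by auto
    have "g \<otimes> w \<otimes> inv g = (g \<otimes> h) \<otimes> x \<otimes> inv (g \<otimes> h)"
      unfolding e using g h x by (simp add: m_assoc inv_mult_group)
    thus "g \<otimes> w \<otimes> inv g \<in> conj_class G x" unfolding conj_class_def using g h by blast
  qed
qed

lemma conj_class_eq:
  fixes G (structure)
  assumes G: "group G" and x: "x \<in> carrier G" and y: "y \<in> carrier G" and xy: "x \<in> conj_class G y"
  shows "conj_class G x = conj_class G y"
proof -
  interpret group G by (rule G)
  obtain h where h: "h \<in> carrier G" and e: "x = h \<otimes> y \<otimes> inv h" using xy unfolding conj_class_def by auto
  show ?thesis
  proof
    show "conj_class G x \<subseteq> conj_class G y"
    proof
      fix w assume "w \<in> conj_class G x"
      then obtain g where g: "g \<in> carrier G" and w: "w = g \<otimes> x \<otimes> inv g" unfolding conj_class_def by auto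
      have "w = (g \<otimes> h) \<otimes> y \<otimes> inv (g \<otimes> h)" unfolding w e using g h y by (simp add: m_assoc inv_mult_group)
      thus "w \<in> conj_class G y" unfolding conj_class_def using g h by blast
    qed
    show "conj_class G y \<subseteq> conj_class G x"
    proof
      fix w assume "w \<in> conj_class G y"
      then obtain g where g: "g \<in> carrier G" and w: "w = g \<otimes> y \<otimes> inv g" unfolding conj_class_def by auto
      have yx: "y = inv h \<otimes> x \<otimes> h" unfolding e using h y by (simp add: m_assoc[symmetric]) (simp add: m_assoc)
      have "w = (g \<otimes> inv h) \<otimes> x \<otimes> inv (g \<otimes> inv h)" unfolding w yx using g h x by (simp add: m_assoc inv_mult_group)
      thus "w \<in> conj_class G x" unfolding conj_class_def using g h by blast
    qed
  qed
qed

lemma orbit_stab_conj: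
  fixes G (structure)
  assumes G: "group G" and x: "x \<in> carrier G"
  shows "card (conj_class G x) * card (centralizer G x) = card (carrier G)"
proof -
  interpret group G by (rule G)
  let ?\<phi> = "\<lambda>g. (\<lambda>h \<in> carrier G. g \<otimes> h \<otimes> inv g)"
  interpret A: group_action G "carrier G" ?\<phi> by (rule action_by_conjugation)
  have "orbit G ?\<phi> x = conj_class G x" unfolding orbit_def conj_class_def using x by auto
  moreover have "stabilizer G ?\<phi> x = centralizer G x"
  proof -
    have "g \<otimes> x \<otimes> inv g = x \<longleftrightarrow> g \<otimes> x = x \<otimes> g" if g: "g \<in> carrier G" for g
    proof
      assume "g \<otimes> x \<otimes> inv g = x"
      hence "g \<otimes> x \<otimes> inv g \<otimes> g = x \<otimes> g" by simp
      thus "g \<otimes> x = x \<otimes> g" using g x by (simp add: m_assoc)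
    next
      assume e: "g \<otimes> x = x \<otimes> g"
      have "g \<otimes> x \<otimes> inv g = x \<otimes> g \<otimes> inv g" unfolding e ..
      thus "g \<otimes> x \<otimes> inv g = x" using g x by (simp add: m_assoc)
    qed
    thus ?thesis unfolding stabilizer_def centralizer_def using x by auto
  qed
  ultimately show ?thesis using A.orbit_stabilizer_theorem[OF x] unfolding order_def by simp
qed

lemma pairing_delta:
  fixes G (structure)
  assumes G: "group G" and fin: "finite (carrier G)" and z: "z \<in> carrier G"
    and cls: "\<forall>g\<in>carrier G. \<forall>w\<in>carrier G. \<chi> (g \<otimes> w \<otimes> inv g) = \<chi> w"
  shows "pairing G (\<lambda>w. if w \<in> conj_class G z then 1 else 0) \<chi> = of_nat (card (conj_class G z)) * \<chi> (inv z)"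
proof -
  interpret group G by (rule G)
  have sub: "conj_class G z \<subseteq> carrier G" by (rule conj_class_sub[OF G z])
  have "pairing G (\<lambda>w. if w \<in> conj_class G z then 1 else 0) \<chi> = (\<Sum>w\<in>carrier G. if w \<in> conj_class G z then \<chi> (inv w) else 0)"
    unfolding pairing_def by (intro sum.cong refl) simp
  also have "\<dots> = (\<Sum>w\<in>conj_class G z. \<chi> (inv w))"
    using sum.inter_restrict[OF fin, of "\<lambda>w. \<chi> (inv w)" "conj_class G z"] sub
    by (simp add: Int_absorb1 Int_commute)
  also have "\<dots> = (\<Sum>w\<in>conj_class G z. \<chi> (inv z))"
  proof (intro sum.cong refl)
    fix w assume "w \<in> conj_class G z"
    then obtain g where g: "g \<in> carrier G" and w: "w = g \<otimes> z \<otimes> inv g" unfolding conj_class_def by auto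
    have "inv w = g \<otimes> inv z \<otimes> inv g" unfolding w using g z by (simp add: inv_mult_group m_assoc)
    thus "\<chi> (inv w) = \<chi> (inv z)" using cls g z by simp
  qed
  also have "\<dots> = of_nat (card (conj_class G z)) * \<chi> (inv z)" by simp
  finally show ?thesis .
qed

lemma card4_distinct:
  assumes "card {a, b, c, d} = 4"
  shows "a \<noteq> b" "a \<noteq> c" "a \<noteq> d" "b \<noteq> c" "b \<noteq> d" "c \<noteq> d"
  using assms by (auto simp: card_insert_if split: if_splits)


lemma main_aux:
  fixes G :: "('a, 'b) monoid_scheme" (structure)
    and \<sigma> :: "complex \<Rightarrow> complex"
    and n r :: nat
    and \<chi>1 \<chi>2 :: "'a \<Rightarrow> complex"
    and x :: 'a
  assumes "group G" and "finite (carrier G)"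
    and "n = group_exponent G"
    and "is_galois_auto n \<sigma>"
    and "\<sigma> (prim_root n) = prim_root n ^ r"
    and "\<chi>1 \<in> Irr G" and "\<chi>2 \<in> Irr G"
    and "{\<chi> \<in> Irr G. gal_act G \<sigma> \<chi> \<noteq> \<chi>} = {\<chi>1, gal_act G \<sigma> \<chi>1, \<chi>2, gal_act G \<sigma> \<chi>2}"
    and "card {\<chi> \<in> Irr G. gal_act G \<sigma> \<chi> \<noteq> \<chi>} = 4"
    and "gal_act G \<sigma> (gal_act G \<sigma> \<chi>1) = \<chi>1"
    and "gal_act G \<sigma> (gal_act G \<sigma> \<chi>2) = \<chi>2"
    and "x \<in> carrier G"
    and "conj_class G (x [^]\<^bsub>G\<^esub> r) \<noteq> conj_class G x"
  shows "real (card (centralizer G x)) =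
           (cmod (\<chi>1 x - gal_act G \<sigma> \<chi>1 x))\<^sup>2 + (cmod (\<chi>2 x - gal_act G \<sigma> \<chi>2 x))\<^sup>2"
proof -
  note G = assms(1) and fin = assms(2) and nG = assms(3) and \<sigma> = assms(4) and r = assms(5)
    and X_eq = assms(8) and card4 = assms(9) and inv1 = assms(10) and inv2 = assms(11)
    and x = assms(12) and ncl = assms(13)
  interpret group G by (rule G)
  define a1 where "a1 = gal_act G \<sigma> \<chi>1"
  define a2 where "a2 = gal_act G \<sigma> \<chi>2"
  define X where "X = {\<chi> \<in> Irr G. gal_act G \<sigma> \<chi> \<noteq> \<chi>}"
  have XE: "X = {\<chi>1, a1, \<chi>2, a2}" unfolding X_def a1_def a2_def using X_eq .
  have XI: "X \<subseteq> Irr G" unfolding X_def by auto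
  have finX: "finite X" unfolding XE by simp
  have c4: "card {\<chi>1, a1, \<chi>2, a2} = 4" using card4 unfolding XE[symmetric] X_def .
  note dist = card4_distinct[OF c4]
  let ?N = "card (carrier G)"
  define y where "y = x [^] r"
  have y: "y \<in> carrier G" unfolding y_def using x by simp
  have irr_class: "\<psi> (g \<otimes> w \<otimes> inv g) = \<psi> w" if psi: "\<psi> \<in> Irr G" and gw: "g \<in> carrier G" "w \<in> carrier G" for \<psi> g w
  proof -
    obtain d \<rho> where "is_irred_rep G d \<rho>" "\<psi> = character G \<rho>" using psi unfolding Irr_def by auto
    thus ?thesis using char_class[OF G _ gw] irred_rep by blast
  qed
  have galx: "gal_act G \<sigma> \<psi> z = \<psi> (z [^] r)" if "\<psi> \<in> Irr G" "z \<in> carrier G" for \<psi> z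
    unfolding gal_act_def using char_gal(1)[OF G fin nG \<sigma> r that] that(2) by simp
  have cnjx: "\<psi> (inv z) = cnj (\<psi> z)" if "\<psi> \<in> Irr G" "z \<in> carrier G" for \<psi> z
    using char_gal(2)[OF G fin nG \<sigma> r that] by simp
  have fixed: "gal_act G \<sigma> \<psi> = \<psi>" if "\<psi> \<in> Irr G" "\<psi> \<notin> X" for \<psi>
    using that unfolding X_def by auto
  define \<delta> where "\<delta> z w = (if w \<in> conj_class G z then 1 else (0::complex))" for z w
  have \<delta>cls: "\<delta> z (g \<otimes> w \<otimes> inv g) = \<delta> z w" if "z \<in> carrier G" "g \<in> carrier G" "w \<in> carrier G" for z g w
    unfolding \<delta>_def using conj_class_conj[OF G that] by simp
  define cx where "cx = (of_nat (card (conj_class G x)) :: complex)"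
  define cy where "cy = (of_nat (card (conj_class G y)) :: complex)"
  have cx0: "cx \<noteq> 0"
  proof -
    have "finite (conj_class G x)" using conj_class_sub[OF G x] fin by (rule finite_subset)
    moreover have "x \<in> conj_class G x" by (rule conj_class_self[OF G x])
    ultimately show ?thesis unfolding cx_def by (auto simp: card_gt_0_iff)
  qed
  have cy0: "cy \<noteq> 0"
  proof -
    have "finite (conj_class G y)" using conj_class_sub[OF G y] fin by (rule finite_subset)
    moreover have "y \<in> conj_class G y" by (rule conj_class_self[OF G y])
    ultimately show ?thesis unfolding cy_def by (auto simp: card_gt_0_iff)
  qed
  have N0: "(of_nat ?N :: complex) \<noteq> 0" using fin one_closed by (auto simp: card_gt_0_iff)
  define c where "c \<psi> = cx * (\<psi> (inv x) - \<psi> (inv y)) / of_nat ?N" for \<psi> :: "'a \<Rightarrow> complex"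
  define h where "h w = \<delta> x w - cx / cy * \<delta> y w - (\<Sum>\<psi>\<in>X. c \<psi> * \<psi> w)" for w
  define f where "f w = h (inv w)" for w
  have hcls: "h (g \<otimes> w \<otimes> inv g) = h w" if g: "g \<in> carrier G" and w: "w \<in> carrier G" for g w
  proof -
    have "(\<Sum>\<psi>\<in>X. c \<psi> * \<psi> (g \<otimes> w \<otimes> inv g)) = (\<Sum>\<psi>\<in>X. c \<psi> * \<psi> w)"
      by (intro sum.cong refl) (use irr_class g w XI in auto)
    thus ?thesis unfolding h_def using \<delta>cls[OF x g w] \<delta>cls[OF y g w] by simp
  qed
  have fcls: "\<forall>g\<in>carrier G. \<forall>w\<in>carrier G. f (g \<otimes> w \<otimes> inv g) = f w"
  proof (intro ballI)
    fix g w assume g: "g \<in> carrier G" and w: "w \<in> carrier G"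
    have "inv (g \<otimes> w \<otimes> inv g) = g \<otimes> inv w \<otimes> inv g" using g w by (simp add: inv_mult_group m_assoc)
    thus "f (g \<otimes> w \<otimes> inv g) = f w" unfolding f_def using hcls[OF g inv_closed[OF w]] by simp
  qed
  have pair_lin: "pairing G h \<chi> = pairing G (\<delta> x) \<chi> - cx / cy * pairing G (\<delta> y) \<chi> - (\<Sum>\<psi>\<in>X. c \<psi> * pairing G \<psi> \<chi>)" for \<chi>
  proof -
    have "pairing G h \<chi> = (\<Sum>g\<in>carrier G. \<delta> x g * \<chi> (inv g)) - (\<Sum>g\<in>carrier G. cx / cy * (\<delta> y g * \<chi> (inv g)))
        - (\<Sum>g\<in>carrier G. \<Sum>\<psi>\<in>X. c \<psi> * (\<psi> g * \<chi> (inv g)))"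
      unfolding pairing_def h_def by (simp add: sum_subtractf left_diff_distrib sum_distrib_right mult.assoc)
    also have "(\<Sum>g\<in>carrier G. \<Sum>\<psi>\<in>X. c \<psi> * (\<psi> g * \<chi> (inv g))) = (\<Sum>\<psi>\<in>X. \<Sum>g\<in>carrier G. c \<psi> * (\<psi> g * \<chi> (inv g)))"
      by (rule sum.swap)
    finally show ?thesis unfolding pairing_def by (simp add: sum_distrib_left)
  qed
  have orth: "\<forall>\<chi>\<in>Irr G. (\<Sum>g\<in>carrier G. f g * \<chi> g) = 0"
  proof
    fix \<chi> assume \<chi>: "\<chi> \<in> Irr G"
    have "(\<Sum>g\<in>carrier G. f g * \<chi> g) = pairing G h \<chi>"
      unfolding f_def pairing_def
      using sum_group_inv[OF G, of "\<lambda>g. h (inv g) * \<chi> g"] by simp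
    also have "\<dots> = cx * \<chi> (inv x) - cx / cy * (cy * \<chi> (inv y)) - (\<Sum>\<psi>\<in>X. c \<psi> * (if \<psi> = \<chi> then of_nat ?N else 0))"
    proof -
      have cl: "\<forall>g\<in>carrier G. \<forall>w\<in>carrier G. \<chi> (g \<otimes> w \<otimes> inv g) = \<chi> w" using irr_class[OF \<chi>] by blast
      have "(\<Sum>\<psi>\<in>X. c \<psi> * pairing G \<psi> \<chi>) = (\<Sum>\<psi>\<in>X. c \<psi> * (if \<psi> = \<chi> then of_nat ?N else 0))"
        by (intro sum.cong refl) (use Irr_orth[OF G fin _ \<chi>] XI in auto)
      thus ?thesis unfolding pair_lin \<delta>_def
        using pairing_delta[OF G fin x cl] pairing_delta[OF G fin y cl] unfolding cx_def cy_def by simp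
    qed
    also have "\<dots> = 0"
    proof (cases "\<chi> \<in> X")
      case True
      have "(\<Sum>\<psi>\<in>X. c \<psi> * (if \<psi> = \<chi> then of_nat ?N else 0)) = (\<Sum>\<psi>\<in>X. if \<psi> = \<chi> then c \<chi> * of_nat ?N else 0)"
        by (intro sum.cong refl) auto
      also have "\<dots> = c \<chi> * of_nat ?N" using finX True by simp
      also have "\<dots> = cx * (\<chi> (inv x) - \<chi> (inv y))" unfolding c_def using N0 by simp
      finally have e1: "(\<Sum>\<psi>\<in>X. c \<psi> * (if \<psi> = \<chi> then of_nat ?N else 0)) = cx * (\<chi> (inv x) - \<chi> (inv y))" .
      have e2: "cx / cy * (cy * \<chi> (inv y)) = cx * \<chi> (inv y)" using cy0 by simp
      show ?thesis unfolding e1 e2 by (simp add: algebra_simps)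
    next
      case False
      have "(\<Sum>\<psi>\<in>X. c \<psi> * (if \<psi> = \<chi> then of_nat ?N else 0)) = 0"
        using False by (intro sum.neutral) auto
      moreover have "\<chi> (inv y) = \<chi> (inv x)"
      proof -
        have "inv y = inv x [^] r" unfolding y_def using x by (simp add: nat_pow_inv)
        hence "\<chi> (inv y) = gal_act G \<sigma> \<chi> (inv x)" using galx[OF \<chi> inv_closed[OF x]] by simp
        thus ?thesis using fixed[OF \<chi> False] by simp
      qed
      ultimately show ?thesis using cy0 by simp
    qed
    finally show "(\<Sum>g\<in>carrier G. f g * \<chi> g) = 0" .
  qed
  have "f (inv x) = 0" using completeness[OF G fin fcls orth] x by simp
  hence hx: "h x = 0" unfolding f_def using x by simp
  have dx: "\<delta> x x = 1" unfolding \<delta>_def using conj_class_self[OF G x] by simp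
  have dy: "\<delta> y x = 0"
  proof -
    have "x \<notin> conj_class G y"
    proof
      assume "x \<in> conj_class G y"
      hence "conj_class G x = conj_class G y" by (rule conj_class_eq[OF G x y])
      thus False using ncl unfolding y_def by simp
    qed
    thus ?thesis unfolding \<delta>_def by simp
  qed
  have S1: "(\<Sum>\<psi>\<in>X. c \<psi> * \<psi> x) = 1" using hx dx dy unfolding h_def by simp
  have "(\<Sum>\<psi>\<in>X. c \<psi> * \<psi> x) = cx / of_nat ?N * (\<Sum>\<psi>\<in>X. \<psi> x * (\<psi> (inv x) - \<psi> (inv y)))"
    unfolding c_def by (simp add: sum_distrib_left mult_ac)
  hence S2: "(\<Sum>\<psi>\<in>X. \<psi> x * (\<psi> (inv x) - \<psi> (inv y))) = of_nat ?N / cx"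
    using S1 cx0 N0 by (simp add: field_simps)
  have ost: "card (conj_class G x) * card (centralizer G x) = ?N" by (rule orbit_stab_conj[OF G x])
  have S3: "of_nat ?N / cx = of_nat (card (centralizer G x))"
    using cx0 unfolding cx_def ost[symmetric] by (simp add: field_simps)
  have trm: "\<psi> x * (\<psi> (inv x) - \<psi> (inv y)) = \<psi> x * cnj (\<psi> x - gal_act G \<sigma> \<psi> x)" if "\<psi> \<in> Irr G" for \<psi>
  proof -
    have "\<psi> (inv y) = cnj (\<psi> y)" by (rule cnjx[OF that y])
    also have "\<psi> y = gal_act G \<sigma> \<psi> x" unfolding y_def using galx[OF that x] by simp
    finally show ?thesis using cnjx[OF that x] by simp
  qed
  have Irr4: "\<chi>1 \<in> Irr G" "a1 \<in> Irr G" "\<chi>2 \<in> Irr G" "a2 \<in> Irr G" using XI unfolding XE by auto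
  have ga1: "gal_act G \<sigma> a1 = \<chi>1" unfolding a1_def by (rule inv1)
  have ga2: "gal_act G \<sigma> a2 = \<chi>2" unfolding a2_def by (rule inv2)
  have "(\<Sum>\<psi>\<in>X. \<psi> x * (\<psi> (inv x) - \<psi> (inv y))) = (\<Sum>\<psi>\<in>X. \<psi> x * cnj (\<psi> x - gal_act G \<sigma> \<psi> x))"
    by (intro sum.cong refl) (use trm XI in auto)
  also have "\<dots> = \<chi>1 x * cnj (\<chi>1 x - a1 x) + a1 x * cnj (a1 x - \<chi>1 x)
      + (\<chi>2 x * cnj (\<chi>2 x - a2 x) + a2 x * cnj (a2 x - \<chi>2 x))"
  proof -
    have f1: "gal_act G \<sigma> \<chi>1 = a1" and f2: "gal_act G \<sigma> \<chi>2 = a2" unfolding a1_def a2_def by simp_all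
    show ?thesis unfolding XE using dist ga1 ga2 f1 f2 by (simp add: add.assoc)
  qed
  also have "\<dots> = (\<chi>1 x - a1 x) * cnj (\<chi>1 x - a1 x) + (\<chi>2 x - a2 x) * cnj (\<chi>2 x - a2 x)"
    by (simp add: algebra_simps)
  also have "\<dots> = complex_of_real ((cmod (\<chi>1 x - a1 x))\<^sup>2 + (cmod (\<chi>2 x - a2 x))\<^sup>2)"
    unfolding of_real_add complex_norm_square ..
  finally have "complex_of_real ((cmod (\<chi>1 x - a1 x))\<^sup>2 + (cmod (\<chi>2 x - a2 x))\<^sup>2) = of_nat (card (centralizer G x))"
    using S2 S3 by simp
  hence "complex_of_real ((cmod (\<chi>1 x - a1 x))\<^sup>2 + (cmod (\<chi>2 x - a2 x))\<^sup>2) = complex_of_real (real (card (centralizer G x)))"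
    by simp
  hence "(cmod (\<chi>1 x - a1 x))\<^sup>2 + (cmod (\<chi>2 x - a2 x))\<^sup>2 = real (card (centralizer G x))"
    using of_real_eq_iff by blast
  thus ?thesis unfolding a1_def a2_def by simp
qed


theorem mainTheorem10:
  fixes G :: "('a, 'b) monoid_scheme"
    and \<sigma> :: "complex \<Rightarrow> complex"
    and n r :: nat
    and \<chi>1 \<chi>2 :: "'a \<Rightarrow> complex"
    and x :: 'a
  assumes "group G" and "finite (carrier G)"
    and "n = group_exponent G"
    and "is_galois_auto n \<sigma>"
    and "\<sigma> (prim_root n) = prim_root n ^ r"
    and "\<chi>1 \<in> Irr G" and "\<chi>2 \<in> Irr G"
    and "{\<chi> \<in> Irr G. gal_act G \<sigma> \<chi> \<noteq> \<chi>} = {\<chi>1, gal_act G \<sigma> \<chi>1, \<chi>2, gal_act G \<sigma> \<chi>2}"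
    and "card {\<chi> \<in> Irr G. gal_act G \<sigma> \<chi> \<noteq> \<chi>} = 4"
    and "gal_act G \<sigma> (gal_act G \<sigma> \<chi>1) = \<chi>1"
    and "gal_act G \<sigma> (gal_act G \<sigma> \<chi>2) = \<chi>2"
    and "x \<in> carrier G"
    and "conj_class G (x [^]\<^bsub>G\<^esub> r) \<noteq> conj_class G x"
  shows "real (card (centralizer G x)) =
           (cmod (\<chi>1 x - gal_act G \<sigma> \<chi>1 x))\<^sup>2 + (cmod (\<chi>2 x - gal_act G \<sigma> \<chi>2 x))\<^sup>2"
  using main_aux[OF assms] .


end
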